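(* Let $\nu_m=\nu^{\rhd m}$ be the $m$-fold monotone convolution of the standard semicircle law $\nu$ (equivalently the vacuum distribution of $G_1+\cdots+G_m$). Then for each $m\ge1$ the support of $\nu_m$ is a symmetric interval $[-a_m,a_m]$, where $a_1=2$ and $$a_{m+1}=a_m+\frac1{a_m}\qquad(m\ge1).$$ Moreover $\mathrm{supp}(\nu_{m-1})\subseteq\mathrm{supp}(\nu_m)$ for $m\ge2$.
   Context: The standard semicircle law is $\nu(dx)=\frac1{2\pi}\sqrt{4-x^2}\mathbf 1_{[-2,2]}dx$. For probability measures $\mu,\nu$ on $\mathbb R$ with Cauchy transforms $\mathcal G_\mu(z)=\int\frac{\mu(dx)}{z-x}$ and reciprocal Cauchy transforms $H_\mu=1/\mathcal G_\mu$, the monotone convolution $\mu\rhd\nu$ is the unique probability measure $\rho$ with $H_\rho=H_\mu\circ H_\nu$ on $\mathbb C^+$; $\nu^{\rhd m}=\nu\rhd\cdots\rhd\nu$ ($m$ factors). In the paper's model, $\nu_m$ is the vacuum distribution of $G_1+\cdots+G_m$, where $G_i=A_i+A_i^\dagger$ are the position operators on the weakly monotone Fock space. *)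

theory Defs
  imports "HOL-Probability.Probability"
begin

definition semicircle :: "real measure" where
  "semicircle = density lborel
     (\<lambda>x. ennreal (indicator {-2..2} x * sqrt (4 - x\<^sup>2) / (2 * pi)))"

definition cauchy_transform :: "real measure \<Rightarrow> complex \<Rightarrow> complex" where
  "cauchy_transform M z = (\<integral>x. 1 / (z - complex_of_real x) \<partial>M)"

definition recip_cauchy :: "real measure \<Rightarrow> complex \<Rightarrow> complex" where
  "recip_cauchy M z = 1 / cauchy_transform M z"

definition monotone_conv :: "real measure \<Rightarrow> real measure \<Rightarrow> real measure" where
  "monotone_conv \<mu> \<nu> = (THE \<rho>. prob_space \<rho> \<and> sets \<rho> = sets borel \<and>
      (\<forall>z. 0 < Im z \<longrightarrow> recip_cauchy \<rho> z = recip_cauchy \<mu> (recip_cauchy \<nu> z)))"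

fun monotone_power :: "real measure \<Rightarrow> nat \<Rightarrow> real measure" where
  "monotone_power \<mu> 0 = return borel 0"
| "monotone_power \<mu> (Suc m) = monotone_conv (monotone_power \<mu> m) \<mu>"

definition msupport :: "real measure \<Rightarrow> real set" where
  "msupport M = {x. \<forall>e>0. 0 < measure M (ball x e)}"

end

theory Submission
  imports Defs "HOL-Complex_Analysis.Complex_Analysis"
begin
lemma sq_le4: "\<bar>t\<bar> \<le> 2 \<Longrightarrow> (t::real)^2 \<le> 4"
  using power_mono[of "\<bar>t\<bar>" 2 2] by simp

lemma sq_less4: "\<bar>t\<bar> < 2 \<Longrightarrow> (t::real)^2 < 4"
  using power_strict_mono[of "\<bar>t\<bar>" 2 2] by simp

lemma sqrt4_sq: "\<bar>t\<bar> \<le> 2 \<Longrightarrow> sqrt (4 - t^2) ^ 2 = 4 - (t::real)^2"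
  using sq_le4[of t] by simp

lemma sqrt4_pos: "\<bar>t\<bar> < 2 \<Longrightarrow> 0 < sqrt (4 - (t::real)^2)"
  using sq_less4[of t] by simp

lemma sqrt_four: "sqrt 4 = (2::real)"
  by (rule real_sqrt_unique) auto

lemma sqrt_quarter: "sqrt (1 - (t/2)^2) = sqrt (4 - (t::real)^2) / 2"
proof -
  have e: "1 - (t/2)^2 = (4 - t^2) / 4" by (simp add: field_simps power2_eq_square)
  show ?thesis by (subst e) (simp add: real_sqrt_divide sqrt_four)
qed

lemma sqrt_int: "((\<lambda>t. sqrt (4 - t^2)) has_integral 2*pi) {-2..2::real}"
proof -
  define F where "F t = (t * sqrt (4 - t^2) + 4 * arcsin (t/2)) / 2" for t :: real
  have "((\<lambda>t. sqrt (4 - t^2)) has_integral (F 2 - F (-2))) {-2..2::real}"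
  proof (rule fundamental_theorem_of_calculus_interior)
    show "continuous_on {-2..2} F" unfolding F_def
      by (intro continuous_intros) auto
  next
    fix t :: real assume t: "t \<in> {-2<..<2}"
    then have tt: "\<bar>t\<bar> < 2" by auto
    define s where "s = sqrt (4 - t^2)"
    have p: "0 < s" using sqrt4_pos[OF tt] s_def by simp
    have s2: "s^2 = 4 - t^2" using sqrt4_sq[of t] tt s_def by simp
    have p2: "0 < 4 - t^2" using sq_less4[OF tt] by simp
    have d: "(F has_real_derivative
      ((sqrt (4 - t^2) + t * (inverse (sqrt (4 - t^2)) / 2 * (- (2 * t)))) + 4 * (inverse (sqrt (1 - (t/2)^2)) * (1/2))) / 2) (at t)"
      unfolding F_def using t p2
      by (auto intro!: derivative_eq_intros DERIV_arcsin simp: power2_eq_square)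
    have "((sqrt (4 - t^2) + t * (inverse (sqrt (4 - t^2)) / 2 * (- (2 * t)))) + 4 * (inverse (sqrt (1 - (t/2)^2)) * (1/2))) / 2
        = (s + t * (inverse s / 2 * (- (2 * t))) + 4 * (inverse (s/2) * (1/2))) / 2"
      unfolding sqrt_quarter s_def ..
    also have "\<dots> = (s^2 - t^2 + 4) / (2 * s)" using p by (simp add: field_simps power2_eq_square)
    also have "\<dots> = s" using p s2 by (simp add: field_simps power2_eq_square)
    finally have "(F has_real_derivative s) (at t)" using d by (rule DERIV_cong[rotated])
    then show "(F has_vector_derivative sqrt (4 - t^2)) (at t)"
      by (simp add: has_real_derivative_iff_has_vector_derivative s_def)
  qed auto
  moreover have "F 2 - F (-2) = 2 * pi" by (simp add: F_def)
  ultimately show ?thesis by simp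
qed

lemma one_minus_sq_div: "(b::real) \<noteq> 0 \<Longrightarrow> 1 - (a/b)^2 = (b^2 - a^2)/b^2"
  by (simp add: power_divide field_simps)

lemma sq_le1_bounds: "(x::real)^2 \<le> 1 \<Longrightarrow> -1 \<le> x \<and> x \<le> 1"
  by (simp add: abs_square_le_1 abs_le_iff)

lemma sq_less1_bounds: "(x::real)^2 < 1 \<Longrightarrow> -1 < x \<and> x < 1"
  by (simp add: abs_square_less_1 abs_less_iff)

lemma one_minus_u2:
  fixes w t :: real
  assumes "w > 2" "\<bar>t\<bar> \<le> 2"
  shows "1 - ((w*t - 4) / (2*(w-t)))^2 = ((w^2-4)*(4-t^2)) / (4*(w-t)^2)"
proof -
  have d: "2*(w-t) \<noteq> 0" using assms by auto
  have "1 - ((w*t - 4) / (2*(w-t)))^2 = ((2*(w-t))^2 - (w*t-4)^2) / (2*(w-t))^2"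
    using d by (rule one_minus_sq_div)
  also have "(2*(w-t))^2 = 4*(w-t)^2" by (simp add: power2_eq_square algebra_simps)
  also have "4*(w-t)^2 - (w*t-4)^2 = (w^2-4)*(4-t^2)" by (simp add: power2_eq_square algebra_simps)
  finally show ?thesis .
qed

lemma u_bounds:
  fixes w t :: real
  assumes "w > 2" "\<bar>t\<bar> \<le> 2"
  shows "-1 \<le> (w*t - 4) / (2*(w-t)) \<and> (w*t - 4) / (2*(w-t)) \<le> 1"
proof -
  have "0 \<le> ((w^2-4)*(4-t^2)) / (4*(w-t)^2)"
    using assms sq_le4[of t] power_strict_mono[of 2 w 2] by (intro divide_nonneg_nonneg mult_nonneg_nonneg) auto
  then have "((w*t - 4) / (2*(w-t)))^2 \<le> 1" using one_minus_u2[OF assms] by simp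
  then show ?thesis by (rule sq_le1_bounds)
qed

lemma alg1:
  fixes r s d w t :: real
  assumes "r > 0" "s > 0" "d > 0" "w = t + d"
  shows "w * (inverse (r/2) * (1/2)) - (inverse r / 2 * (- (2 * t)))
        - s * (inverse (s * r / (2 * d)) * ((w * (2*d) - (w*t-4) * (2 * (0 - 1))) / (2*d)^2))
     = ((w+t)*d - (w*w + (-4) - 2*w*t + 2*w*t)) / (r * d)"
  using assms by (simp add: field_simps power2_eq_square)

lemma wint_gt2:
  fixes w :: real assumes w: "w > 2"
  shows "((\<lambda>t. sqrt (4 - t^2) / (w - t)) has_integral pi * (w - sqrt (w^2 - 4))) {-2..2}"
proof -
  define s where "s = sqrt (w^2 - 4)"
  have w4: "w^2 - 4 > 0" using w power_strict_mono[of 2 w 2] by simp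
  have sp: "s > 0" using w4 s_def by simp
  have s2: "s^2 = w^2 - 4" using w4 s_def by simp
  define u where "u t = (w*t - 4) / (2*(w-t))" for t
  define F where "F t = w * arcsin (t/2) - sqrt (4 - t^2) - s * arcsin (u t)" for t :: real
  have "((\<lambda>t. sqrt (4 - t^2) / (w - t)) has_integral (F 2 - F (-2))) {-2..2::real}"
  proof (rule fundamental_theorem_of_calculus_interior)
    show "continuous_on {-2..2} F" unfolding F_def u_def
      using w u_bounds[OF w] by (intro continuous_intros) auto
  next
    fix t :: real assume t: "t \<in> {-2<..<2}"
    then have tt: "\<bar>t\<bar> < 2" by auto
    define r where "r = sqrt (4 - t^2)"
    have p: "0 < r" using sqrt4_pos[OF tt] r_def by simp
    have r2: "r^2 = 4 - t^2" using sqrt4_sq[of t] tt r_def by simp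
    have wt: "w - t > 0" using tt w by auto
    have p2: "0 < 4 - t^2" using sq_less4[OF tt] by simp
    have q: "sqrt (1 - (u t)^2) = s * r / (2 * (w - t))"
    proof -
      have e1: "(s*r/(2*(w-t)))^2 = s^2*r^2/(4*(w-t)^2)" by (simp add: power2_eq_square algebra_simps)
      have "1 - (u t)^2 = (w^2-4)*(4-t^2)/(4*(w-t)^2)" unfolding u_def using tt by (intro one_minus_u2[OF w]) auto
      then have "1 - (u t)^2 = (s * r / (2 * (w - t)))^2" unfolding e1 s2 r2 .
      then show ?thesis using sp p wt by simp
    qed
    have qpos: "0 < 1 - (u t)^2" using q sp p wt
      by (metis divide_pos_pos mult_pos_pos real_sqrt_gt_0_iff zero_less_numeral)
    have ub: "-1 < u t \<and> u t < 1"
    proof -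
      have "(u t)^2 < 1" using qpos by simp
      then show ?thesis by (rule sq_less1_bounds)
    qed
    have du: "(u has_real_derivative (w * (2*(w-t)) - (w*t-4) * (2 * (0 - 1))) / (2*(w-t))^2) (at t)"
      unfolding u_def using wt by (auto intro!: derivative_eq_intros simp: power2_eq_square)
    have d: "(F has_real_derivative
      (w * (inverse (sqrt (1 - (t/2)^2)) * (1/2)) - (inverse (sqrt (4 - t^2)) / 2 * (- (2 * t)))
        - s * (inverse (sqrt (1 - (u t)^2)) * ((w * (2*(w-t)) - (w*t-4) * (2 * (0 - 1))) / (2*(w-t))^2)))) (at t)"
      unfolding F_def using t p2 ub
      by (auto intro!: derivative_eq_intros DERIV_arcsin du simp: power2_eq_square) (simp add: algebra_simps)
    have "(w * (inverse (sqrt (1 - (t/2)^2)) * (1/2)) - (inverse (sqrt (4 - t^2)) / 2 * (- (2 * t)))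
        - s * (inverse (sqrt (1 - (u t)^2)) * ((w * (2*(w-t)) - (w*t-4) * (2 * (0 - 1))) / (2*(w-t))^2)))
       = (w * (inverse (r/2) * (1/2)) - (inverse r / 2 * (- (2 * t)))
        - s * (inverse (s * r / (2 * (w - t))) * ((w * (2*(w-t)) - (w*t-4) * (2 * (0 - 1))) / (2*(w-t))^2)))"
      unfolding sqrt_quarter q r_def ..
    also have "\<dots> = ((w+t)*(w-t) - (w*w + (-4) - 2*w*t + 2*w*t)) / (r * (w-t))"
      using p sp wt by (intro alg1) auto
    also have "\<dots> = r^2 / (r * (w - t))" using r2 by (simp add: algebra_simps power2_eq_square)
    also have "\<dots> = r / (w - t)" using p by (simp add: power2_eq_square)
    finally have "(F has_real_derivative r / (w - t)) (at t)" using d by (rule DERIV_cong[rotated])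
    then show "(F has_vector_derivative sqrt (4 - t^2) / (w - t)) (at t)"
      by (simp add: has_real_derivative_iff_has_vector_derivative r_def)
  qed auto
  moreover have "F 2 - F (-2) = pi * (w - s)"
  proof -
    have "u 2 = 1" "u (-2) = -1" unfolding u_def using w by (auto simp: field_simps)
    then show ?thesis by (simp add: F_def algebra_simps)
  qed
  ultimately show ?thesis by (simp add: s_def)
qed

lemma wint_eq2:
  "((\<lambda>t. sqrt (4 - t^2) / (2 - t)) has_integral pi * (2 - sqrt (2^2 - 4))) {-2..2::real}"
proof -
  define F where "F t = 2 * arcsin (t/2) - sqrt (4 - t^2)" for t :: real
  have "((\<lambda>t. sqrt (4 - t^2) / (2 - t)) has_integral (F 2 - F (-2))) {-2..2::real}"
  proof (rule fundamental_theorem_of_calculus_interior)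
    show "continuous_on {-2..2} F" unfolding F_def
      by (intro continuous_intros) auto
  next
    fix t :: real assume t: "t \<in> {-2<..<2}"
    then have tt: "\<bar>t\<bar> < 2" by auto
    define r where "r = sqrt (4 - t^2)"
    have p: "0 < r" using sqrt4_pos[OF tt] r_def by simp
    have r2: "r^2 = 4 - t^2" using sqrt4_sq[of t] tt r_def by simp
    have wt: "2 - t > 0" using tt by auto
    have p2: "0 < 4 - t^2" using sq_less4[OF tt] by simp
    have d: "(F has_real_derivative
      (2 * (inverse (sqrt (1 - (t/2)^2)) * (1/2)) - (inverse (sqrt (4 - t^2)) / 2 * (- (2 * t))))) (at t)"
      unfolding F_def using t p2
      by (auto intro!: derivative_eq_intros DERIV_arcsin simp: power2_eq_square)
    have "(2 * (inverse (sqrt (1 - (t/2)^2)) * (1/2)) - (inverse (sqrt (4 - t^2)) / 2 * (- (2 * t))))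
       = (2 * (inverse (r/2) * (1/2)) - (inverse r / 2 * (- (2 * t))))"
      unfolding sqrt_quarter r_def ..
    also have "\<dots> = (2 + t) / r"
      using p by (simp add: field_simps)
    also have "\<dots> = r / (2 - t)"
    proof -
      have "(2 + t) * (2 - t) = r * r" using r2 by (simp add: algebra_simps power2_eq_square)
      then show ?thesis using p wt by (simp add: frac_eq_eq)
    qed
    finally have "(F has_real_derivative r / (2 - t)) (at t)" using d by (rule DERIV_cong[rotated])
    then show "(F has_vector_derivative sqrt (4 - t^2) / (2 - t)) (at t)"
      by (simp add: has_real_derivative_iff_has_vector_derivative r_def)
  qed auto
  moreover have "F 2 - F (-2) = pi * (2 - sqrt (2^2 - 4))" by (simp add: F_def)
  ultimately show ?thesis by simp
qed

lemma wint_ge2: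
  fixes w :: real assumes w: "w \<ge> 2"
  shows "((\<lambda>t. sqrt (4 - t^2) / (w - t)) has_integral pi * (w - sqrt (w^2 - 4))) {-2..2}"
  using wint_gt2[of w] wint_eq2 w by (cases "w = 2") auto

lemma neg_div_swap: "- ((a::real) / (x - w)) = a / (w - x)"
  by (metis minus_diff_eq minus_divide_right)

lemma wint_le_m2:
  fixes w :: real assumes w: "w \<le> -2"
  shows "((\<lambda>t. sqrt (4 - t^2) / (w - t)) has_integral pi * (w + sqrt (w^2 - 4))) {-2..2}"
proof -
  define g where "g t = sqrt (4 - t^2) / (-w - t)" for t
  have "(g has_integral pi * (-w - sqrt ((-w)^2 - 4))) {-2..2}"
    unfolding g_def using wint_ge2[of "-w"] w by simp
  then have "((\<lambda>t. g (-t)) has_integral pi * (-w - sqrt ((-w)^2 - 4))) {-2..- (-2)}"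
    using has_integral_reflect_real[of g "pi * (-w - sqrt ((-w)^2 - 4))" "-2" 2] by blast
  then have "((\<lambda>t. - g (-t)) has_integral - (pi * (-w - sqrt ((-w)^2 - 4)))) {-2..2}"
    by (intro has_integral_neg) simp
  moreover have "(\<lambda>t. - g (-t)) = (\<lambda>t. sqrt (4 - t^2) / (w - t))"
    unfolding g_def by (auto simp: fun_eq_iff neg_div_swap)
  ultimately show ?thesis by (simp add: algebra_simps)
qed

definition sd :: "real \<Rightarrow> real" where
  "sd x = indicator {-2..2} x * sqrt (4 - x\<^sup>2) / (2 * pi)"

lemma sd_meas[measurable]: "sd \<in> borel_measurable borel"
  unfolding sd_def by measurable

lemma sd_nonneg: "0 \<le> sd x"
  unfolding sd_def using sq_le4[of x] by (auto simp: indicator_def)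

lemma sd_out: "x \<notin> {-2..2} \<Longrightarrow> sd x = 0"
  unfolding sd_def by auto

lemma sd_pos: "\<bar>x\<bar> < 2 \<Longrightarrow> 0 < sd x"
  unfolding sd_def using sqrt4_pos[of x] by (auto simp: indicator_def)

lemma semicircle_sd: "semicircle = density lborel (\<lambda>x. ennreal (sd x))"
  unfolding semicircle_def sd_def ..

lemma hk_to_lborel:
  fixes h :: "real \<Rightarrow> real"
  assumes hi: "(h has_integral v) {a..b}" and nn: "\<And>t. t\<in>{a..b} \<Longrightarrow> 0 \<le> h t"
    and meas: "(\<lambda>t. indicator {a..b} t * h t) \<in> borel_measurable borel"
  shows "integrable lborel (\<lambda>t. indicator {a..b} t * h t)"
    "integral\<^sup>L lborel (\<lambda>t. indicator {a..b} t * h t) = v"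
    "(\<integral>\<^sup>+t. ennreal (indicator {a..b} t * h t) \<partial>lborel) = ennreal v"
proof -
  have eq: "(\<lambda>t. indicator {a..b} t * h t) = (\<lambda>t. if t \<in> {a..b} then h t else 0)"
    by (auto simp: indicator_def)
  have hu: "((\<lambda>t. indicator {a..b} t * h t) has_integral v) UNIV"
    unfolding eq has_integral_restrict_UNIV by (rule hi)
  have nn': "\<And>t. 0 \<le> indicator {a..b} t * h t" using nn by (auto simp: indicator_def)
  show nni: "(\<integral>\<^sup>+t. ennreal (indicator {a..b} t * h t) \<partial>lborel) = ennreal v"
    using nn_integral_has_integral_lborel[OF meas nn' hu] .
  show int: "integrable lborel (\<lambda>t. indicator {a..b} t * h t)"
    by (rule integrableI_nn_integral_finite[OF _ _ nni]) (use meas nn' in auto)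
  show "integral\<^sup>L lborel (\<lambda>t. indicator {a..b} t * h t) = v"
    using has_integral_integral_real[OF int] hu has_integral_unique by blast
qed

lemma sd_int: "integrable lborel sd" "integral\<^sup>L lborel sd = 1" "(\<integral>\<^sup>+t. ennreal (sd t) \<partial>lborel) = 1"
proof -
  have hi: "((\<lambda>t. sqrt (4 - t^2) / (2*pi)) has_integral 1) {-2..2}"
    using has_integral_divide[OF sqrt_int, of "2*pi"] by simp
  have e: "sd = (\<lambda>t. indicator {-2..2} t * (sqrt (4 - t^2) / (2*pi)))"
    unfolding sd_def by auto
  have nn: "\<And>t. t \<in> {-2..2} \<Longrightarrow> 0 \<le> sqrt (4 - t^2) / (2*pi)"
    using sq_le4 by auto
  have m: "(\<lambda>t. indicator {-2..2} t * (sqrt (4 - t^2) / (2*pi))) \<in> borel_measurable borel"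
    by measurable
  note h = hk_to_lborel[OF hi nn m]
  show "integrable lborel sd" "integral\<^sup>L lborel sd = 1" "(\<integral>\<^sup>+t. ennreal (sd t) \<partial>lborel) = 1"
    unfolding e using h by auto
qed

lemma prob_semicircle: "prob_space semicircle"
  unfolding semicircle_sd
  by (rule prob_spaceI) (simp add: emeasure_density sd_int)

lemma sets_semicircle[simp]: "sets semicircle = sets borel"
  unfolding semicircle_sd by simp

definition gr :: "real \<Rightarrow> real" where
  "gr w = (if w \<ge> 2 then (w - sqrt (w^2 - 4)) / 2 else (w + sqrt (w^2 - 4)) / 2)"

lemma wlint:
  fixes w :: real assumes w: "\<bar>w\<bar> \<ge> 2"
  shows "integrable lborel (\<lambda>t. sd t / (w - t))" "integral\<^sup>L lborel (\<lambda>t. sd t / (w - t)) = gr w"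
proof -
  have "integrable lborel (\<lambda>t. sd t / (w - t)) \<and> integral\<^sup>L lborel (\<lambda>t. sd t / (w - t)) = gr w"
  proof (cases "w \<ge> 2")
    case True
    have hi: "((\<lambda>t. sqrt (4 - t^2) / (w - t) / (2*pi)) has_integral (w - sqrt (w^2 - 4)) / 2) {-2..2}"
      using has_integral_divide[OF wint_ge2[OF True], of "2*pi"] by simp
    have nn: "\<And>t. t \<in> {-2..2} \<Longrightarrow> 0 \<le> sqrt (4 - t^2) / (w - t) / (2*pi)"
      using sq_le4 True by auto
    have m: "(\<lambda>t. indicator {-2..2} t * (sqrt (4 - t^2) / (w - t) / (2*pi))) \<in> borel_measurable borel"
      by measurable
    note h = hk_to_lborel[OF hi nn m]
    have e: "(\<lambda>t. sd t / (w - t)) = (\<lambda>t. indicator {-2..2} t * (sqrt (4 - t^2) / (w - t) / (2*pi)))"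
      unfolding sd_def by (auto simp: fun_eq_iff)
    show ?thesis unfolding e using h True by (auto simp: gr_def)
  next
    case False
    then have w2: "w \<le> -2" using w by auto
    have hi: "((\<lambda>t. - (sqrt (4 - t^2) / (w - t) / (2*pi))) has_integral - ((w + sqrt (w^2 - 4)) / 2)) {-2..2}"
      using has_integral_neg[OF has_integral_divide[OF wint_le_m2[OF w2], of "2*pi"]] by simp
    have nn: "\<And>t. t \<in> {-2..2} \<Longrightarrow> 0 \<le> - (sqrt (4 - t^2) / (w - t) / (2*pi))"
    proof -
      fix t :: real assume t: "t \<in> {-2..2}"
      have "0 \<le> sqrt (4 - t^2)" using sq_le4[of t] t by auto
      moreover have "w - t \<le> 0" using t w2 by auto
      ultimately have "sqrt (4 - t^2) / (w - t) \<le> 0" by (simp add: divide_nonneg_nonpos)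
      moreover have p: "0 < 2*pi" by simp
      ultimately have "sqrt (4 - t^2) / (w - t) / (2*pi) \<le> 0" by (rule divide_nonpos_pos)
      then show "0 \<le> - (sqrt (4 - t^2) / (w - t) / (2*pi))" by linarith
    qed
    have m: "(\<lambda>t. indicator {-2..2} t * (- (sqrt (4 - t^2) / (w - t) / (2*pi)))) \<in> borel_measurable borel"
      by measurable
    note h = hk_to_lborel[OF hi nn m]
    have e: "(\<lambda>t. sd t / (w - t)) = (\<lambda>t. - (indicator {-2..2} t * (- (sqrt (4 - t^2) / (w - t) / (2*pi)))))"
      unfolding sd_def by (auto simp: fun_eq_iff)
    show ?thesis unfolding e using h False by (auto simp: gr_def)
  qed
  then show "integrable lborel (\<lambda>t. sd t / (w - t))" "integral\<^sup>L lborel (\<lambda>t. sd t / (w - t)) = gr w"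
    by auto
qed

definition Gr :: "real \<Rightarrow> real" where
  "Gr x = (if \<bar>x\<bar> \<le> 1 then x else 1 / x)"

lemma xinv_abs: "(x::real) \<noteq> 0 \<Longrightarrow> \<bar>x + 1/x\<bar> \<ge> 2"
proof -
  assume x: "x \<noteq> 0"
  have "(x + 1/x)^2 - 4 = (x - 1/x)^2" using x by (simp add: power2_eq_square field_simps)
  moreover have "0 \<le> (x - 1/x)^2" by simp
  ultimately have "4 \<le> (x + 1/x)^2" by linarith
  then have "2^2 \<le> (x + 1/x)^2" by simp
  then show ?thesis using abs_le_square_iff[of 2 "x + 1/x"] by simp
qed

lemma gr_xinv: "(x::real) \<noteq> 0 \<Longrightarrow> gr (x + 1/x) = Gr x"
proof -
  assume x: "x \<noteq> 0"
  have "(x + 1/x)^2 - 4 = (x - 1/x)^2" using x by (simp add: power2_eq_square field_simps)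
  then have s: "sqrt ((x + 1/x)^2 - 4) = \<bar>x - 1/x\<bar>" by simp
  show ?thesis
  proof (cases "x > 0")
    case True
    have "1/x > 0" using True by simp
    then have w2: "x + 1/x \<ge> 2" using xinv_abs[OF x] True by simp
    show ?thesis
    proof (cases "x \<le> 1")
      case c: True
      have "1 \<le> 1/x" using c True by simp
      then have "x \<le> 1/x" using c by linarith
      then have "\<bar>x - 1/x\<bar> = 1/x - x" by simp
      then show ?thesis using w2 c True unfolding gr_def Gr_def s by auto
    next
      case c: False
      have "1/x \<le> 1" using c by simp
      then have "1/x \<le> x" using c by linarith
      then have "\<bar>x - 1/x\<bar> = x - 1/x" by simp
      then show ?thesis using w2 c True unfolding gr_def Gr_def s by auto
    qed
  next
    case False
    then have xn: "x < 0" using x by auto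
    have "1/x < 0" using xn by simp
    then have "x + 1/x < 0" using xn by linarith
    then have w2: "x + 1/x \<le> -2" using xinv_abs[OF x] abs_of_neg[of "x + 1/x"] by linarith
    show ?thesis
    proof (cases "x \<ge> -1")
      case c: True
      have "1/x \<le> -1" using c xn by (simp add: divide_le_eq)
      then have "1/x \<le> x" using c by linarith
      then have "\<bar>x - 1/x\<bar> = x - 1/x" by simp
      then show ?thesis using w2 c xn unfolding gr_def Gr_def s by auto
    next
      case c: False
      have "-1 \<le> 1/x" using c xn by (simp add: le_divide_eq)
      then have "x \<le> 1/x" using c by linarith
      then have "\<bar>x - 1/x\<bar> = 1/x - x" by simp
      then show ?thesis using w2 c xn unfolding gr_def Gr_def s by auto
    qed
  qed
qed

definition K :: "real \<Rightarrow> real \<Rightarrow> real" where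
  "K x t = sd t / (1 - t * x + x^2)"

definition mK :: "real \<Rightarrow> real" where
  "mK x = (if \<bar>x\<bar> \<le> 1 then 1 else 1 / x^2)"

lemma K_meas[measurable]:
  assumes [measurable]: "f \<in> borel_measurable M" "g \<in> borel_measurable M"
  shows "(\<lambda>p. K (f p) (g p)) \<in> borel_measurable M"
  unfolding K_def by measurable

lemma denom_nonneg: "\<bar>t\<bar> \<le> 2 \<Longrightarrow> 0 \<le> 1 - t * x + (x::real)^2"
proof -
  assume t: "\<bar>t\<bar> \<le> 2"
  have "t * x \<le> \<bar>t\<bar> * \<bar>x\<bar>" by (metis abs_ge_self abs_mult)
  also have "\<dots> \<le> 2 * \<bar>x\<bar>" using t by (intro mult_right_mono) auto
  finally have a: "t * x \<le> 2 * \<bar>x\<bar>" .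
  have "0 \<le> (1 - \<bar>x\<bar>)^2" by simp
  also have "(1 - \<bar>x\<bar>)^2 = 1 - 2 * \<bar>x\<bar> + x^2" by (simp add: power2_eq_square algebra_simps)
  finally show ?thesis using a by linarith
qed

lemma denom_pos: "\<bar>t\<bar> < 2 \<Longrightarrow> 0 < 1 - t * x + (x::real)^2"
proof -
  assume t: "\<bar>t\<bar> < 2"
  show ?thesis
  proof (cases "x = 0")
    case False
    have "t * x \<le> \<bar>t\<bar> * \<bar>x\<bar>" by (metis abs_ge_self abs_mult)
    also have "\<dots> < 2 * \<bar>x\<bar>" using t False by (intro mult_strict_right_mono) auto
    finally have a: "t * x < 2 * \<bar>x\<bar>" .
    have "0 \<le> (1 - \<bar>x\<bar>)^2" by simp
    also have "(1 - \<bar>x\<bar>)^2 = 1 - 2 * \<bar>x\<bar> + x^2" by (simp add: power2_eq_square algebra_simps)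
    finally show ?thesis using a by linarith
  qed simp
qed

lemma K_nonneg: "0 \<le> K x t"
proof (cases "t \<in> {-2..2}")
  case True
  then show ?thesis unfolding K_def using sd_nonneg denom_nonneg[of t x] by auto
qed (simp add: K_def sd_out)

lemma K_pos: "\<bar>t\<bar> < 2 \<Longrightarrow> 0 < K x t"
  unfolding K_def using sd_pos denom_pos by auto

lemma K_int: "integrable lborel (K x)" "integral\<^sup>L lborel (K x) = mK x"
proof -
  have "integrable lborel (K x) \<and> integral\<^sup>L lborel (K x) = mK x"
  proof (cases "x = 0")
    case True
    have "K x = sd" using True by (simp add: K_def fun_eq_iff)
    then show ?thesis using sd_int True by (simp add: mK_def)
  next
    case False
    have e: "K x = (\<lambda>t. sd t / (x + 1/x - t) / x)"
    proof
      fix t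
      have "1 - t * x + x^2 = (x + 1/x - t) * x" using False by (simp add: field_simps power2_eq_square)
      then show "K x t = sd t / (x + 1/x - t) / x" unfolding K_def by simp
    qed
    note w = wlint[OF xinv_abs[OF False]]
    have "integral\<^sup>L lborel (K x) = integral\<^sup>L lborel (\<lambda>t. sd t / (x + 1/x - t)) / x"
      unfolding e by (rule integral_divide_zero)
    also have "\<dots> = Gr x / x" using w gr_xinv[OF False] by simp
    finally have "integral\<^sup>L lborel (K x) = Gr x / x" .
    also have "\<dots> = mK x" using False by (simp add: Gr_def mK_def power2_eq_square)
    finally show ?thesis unfolding e using integrable_divide_zero[OF w(1)] by blast
  qed
  then show "integrable lborel (K x)" "integral\<^sup>L lborel (K x) = mK x" by auto
qed

lemma K_nnint: "(\<integral>\<^sup>+t. ennreal (K x t) \<partial>lborel) = ennreal (mK x)"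
  using nn_integral_eq_integral[OF K_int(1)] K_int(2) K_nonneg by simp

definition G0 :: "complex \<Rightarrow> complex" where
  "G0 z = cauchy_transform semicircle z"

definition Om :: "complex set" where
  "Om = {z. Im z > 0} \<union> {z. Re z > 2}"

lemma open_Om: "open Om"
  unfolding Om_def by (intro open_Un open_halfspace_Im_gt open_halfspace_Re_gt)

lemma Om_dist:
  assumes "z \<in> Om"
  shows "\<exists>c>0. \<forall>t::real. \<bar>t\<bar> \<le> 2 \<longrightarrow> c \<le> norm (z - of_real t)"
proof (cases "Im z > 0")
  case True
  show ?thesis
  proof (intro exI[of _ "Im z"] conjI allI impI True)
    fix t :: real
    have "Im z = \<bar>Im (z - of_real t)\<bar>" using True by simp
    also have "\<dots> \<le> norm (z - of_real t)" by (rule abs_Im_le_cmod)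
    finally show "Im z \<le> norm (z - of_real t)" .
  qed
next
  case False
  then have r: "Re z > 2" using assms unfolding Om_def by auto
  show ?thesis
  proof (intro exI[of _ "Re z - 2"] conjI allI impI)
    show "0 < Re z - 2" using r by simp
    fix t :: real assume t: "\<bar>t\<bar> \<le> 2"
    have "Re z - 2 \<le> \<bar>Re (z - of_real t)\<bar>" using t r by auto
    also have "\<dots> \<le> norm (z - of_real t)" by (rule abs_Re_le_cmod)
    finally show "Re z - 2 \<le> norm (z - of_real t)" .
  qed
qed

lemma ct_density:
  fixes f :: "real \<Rightarrow> real" and g :: "real \<Rightarrow> complex"
  assumes [measurable]: "f \<in> borel_measurable borel" "g \<in> borel_measurable borel" and "\<And>x. 0 \<le> f x"
  shows "integral\<^sup>L (density lborel (\<lambda>x. ennreal (f x))) g = integral\<^sup>L lborel (\<lambda>t. complex_of_real (f t) * g t)"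
  using integral_density[of g lborel f] assms by (simp add: scaleR_conv_of_real)

lemma G0_lborel: "G0 z = integral\<^sup>L lborel (\<lambda>t. complex_of_real (sd t) * (1 / (z - of_real t)))"
  unfolding G0_def cauchy_transform_def semicircle_sd
  by (rule ct_density) (auto simp: sd_nonneg)

lemma sd_bound_int:
  assumes "\<And>t::real. \<bar>t\<bar> \<le> 2 \<Longrightarrow> c \<le> norm (z - of_real t)" "c > 0"
  shows "integrable lborel (\<lambda>t. complex_of_real (sd t) * (1 / (z - of_real t)))"
proof (rule Bochner_Integration.integrable_bound[where f = "\<lambda>t. sd t / c"])
  show "integrable lborel (\<lambda>t. sd t / c)" using sd_int(1) by simp
  show "(\<lambda>t. complex_of_real (sd t) * (1 / (z - of_real t))) \<in> borel_measurable lborel" by measurable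
  show "AE t in lborel. norm (complex_of_real (sd t) * (1 / (z - of_real t))) \<le> norm (sd t / c)"
  proof (intro AE_I2)
    fix t :: real
    show "norm (complex_of_real (sd t) * (1 / (z - of_real t))) \<le> norm (sd t / c)"
    proof (cases "\<bar>t\<bar> \<le> 2")
      case True
      have n: "0 < norm (z - of_real t)" using assms(1)[OF True] assms(2) by linarith
      have "norm (complex_of_real (sd t) * (1 / (z - of_real t))) = sd t / norm (z - of_real t)"
        using sd_nonneg[of t] by (simp add: norm_mult norm_divide)
      also have "\<dots> \<le> sd t / c" using assms(1)[OF True] assms(2) sd_nonneg[of t] n
        by (intro divide_left_mono) auto
      finally show ?thesis using sd_nonneg[of t] assms(2) by simp
    next
      case False
      then have "sd t = 0" using sd_out[of t] False by (auto simp: abs_le_iff)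
      then show ?thesis by simp
    qed
  qed
qed

lemma G0_int: "z \<in> Om \<Longrightarrow> integrable lborel (\<lambda>t. complex_of_real (sd t) * (1 / (z - of_real t)))"
  using Om_dist sd_bound_int by blast

definition sdc :: "real \<Rightarrow> complex" where
  "sdc t = complex_of_real (sqrt (4 - t^2) / (2 * pi))"

lemma G0_hk: "z \<in> Om \<Longrightarrow> G0 z = integral (cbox (-2) 2) (\<lambda>t. sdc t / (z - of_real t))"
proof -
  assume z: "z \<in> Om"
  have "G0 z = integral UNIV (\<lambda>t. complex_of_real (sd t) * (1 / (z - of_real t)))"
    unfolding G0_lborel using integral_lborel[OF G0_int[OF z]] by simp
  also have "(\<lambda>t. complex_of_real (sd t) * (1 / (z - of_real t))) = (\<lambda>t. if t \<in> {-2..2} then sdc t / (z - of_real t) else 0)"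
    by (auto simp: fun_eq_iff sd_def sdc_def)
  also have "integral UNIV \<dots> = integral {-2..2} (\<lambda>t. sdc t / (z - of_real t))"
    by (rule integral_restrict_UNIV)
  finally show ?thesis by simp
qed

lemma G0_holo_conv:
  assumes U: "convex U" "U \<subseteq> Om"
  shows "G0 holomorphic_on U"
proof -
  have nz: "z - of_real t \<noteq> 0" if "z \<in> U" "t \<in> cbox (-2) 2" for z t
  proof -
    have "z \<in> Om" using that U by auto
    then obtain c where c: "c > 0" "\<And>t::real. \<bar>t\<bar> \<le> 2 \<Longrightarrow> c \<le> norm (z - of_real t)" using Om_dist[of z] by blast
    have "\<bar>t\<bar> \<le> 2" using that by auto
    then show ?thesis using c by force
  qed
  have "(\<lambda>z. integral (cbox (-2) 2) (\<lambda>t. sdc t / (z - of_real t))) holomorphic_on U"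
  proof (rule leibniz_rule_holomorphic[where fx = "\<lambda>z t. - sdc t / (z - of_real t)^2"])
    fix z t assume zt: "z \<in> U" "t \<in> cbox (-2::real) 2"
    show "((\<lambda>z. sdc t / (z - of_real t)) has_field_derivative - sdc t / (z - of_real t)^2) (at z within U)"
      using nz[OF zt] by (auto intro!: derivative_eq_intros simp: power2_eq_square)
  next
    fix z assume z: "z \<in> U"
    show "(\<lambda>t. sdc t / (z - of_real t)) integrable_on cbox (-2) 2"
      unfolding sdc_def using nz[OF z]
      by (intro integrable_continuous continuous_intros) auto
  next
    show "continuous_on (U \<times> cbox (-2) 2) (\<lambda>(z, t). - sdc t / (z - of_real t)^2)"
      unfolding sdc_def case_prod_beta using nz
      by (intro continuous_intros) auto
  qed (rule U)
  then show ?thesis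
    by (rule holomorphic_transform) (use G0_hk U in auto)
qed

lemma G0_holo: "G0 holomorphic_on Om"
proof -
  have "G0 holomorphic_on ({z. Im z > 0} \<union> {z. Re z > 2})"
    by (intro holomorphic_on_Un G0_holo_conv convex_halfspace_Im_gt convex_halfspace_Re_gt
        open_halfspace_Im_gt open_halfspace_Re_gt) (auto simp: Om_def)
  then show ?thesis unfolding Om_def .
qed

lemma G0_real: "\<bar>w\<bar> \<ge> 2 \<Longrightarrow> G0 (of_real w) = of_real (gr w)"
proof -
  assume w: "\<bar>w\<bar> \<ge> 2"
  have "G0 (of_real w) = integral\<^sup>L lborel (\<lambda>t. complex_of_real (sd t / (w - t)))"
    unfolding G0_lborel by (rule arg_cong[where f="integral\<^sup>L lborel"]) (auto simp: fun_eq_iff)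
  also have "\<dots> = of_real (integral\<^sup>L lborel (\<lambda>t. sd t / (w - t)))" by (rule integral_complex_of_real)
  finally show ?thesis using wlint[OF w] by simp
qed

lemma gr_fe: "w > 2 \<Longrightarrow> (gr w)^2 - w * gr w + 1 = 0"
proof -
  assume w: "w > 2"
  have w4: "w^2 - 4 > 0" using w power_strict_mono[of 2 w 2] by simp
  define s where "s = sqrt (w^2 - 4)"
  have s2: "s^2 = w^2 - 4" using w4 s_def by simp
  have g: "gr w = (w - s) / 2" using w by (simp add: gr_def s_def)
  have "(gr w)^2 - w * gr w + 1 = ((w - s)/2)^2 - w * ((w - s)/2) + 1" unfolding g ..
  also have "\<dots> = (s^2 - w^2 + 4) / 4" by (simp add: power2_eq_square field_simps)
  finally have "(gr w)^2 - w * gr w + 1 = (s^2 - w^2 + 4) / 4" .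
  then show ?thesis using s2 by simp
qed

lemma connected_Om: "connected Om"
proof -
  have "\<i> + 3 \<in> {z. Im z > 0} \<inter> {z. Re z > 2}" by simp
  then have ne: "{z. Im z > 0} \<inter> {z. Re z > 2} \<noteq> {}" by blast
  show ?thesis unfolding Om_def
    by (intro connected_Un convex_connected convex_halfspace_Im_gt convex_halfspace_Re_gt ne)
qed

lemma three_limpt: "(3::complex) islimpt (of_real ` {2<..})"
proof (rule islimpt_approachable[THEN iffD2], intro allI impI)
  fix e :: real assume e: "e > 0"
  define d where "d = min (e/2) (1/2)"
  have d: "d > 0" "d < e" "d \<le> 1/2" using e by (auto simp: d_def)
  show "\<exists>x'\<in>of_real ` {2<..}. x' \<noteq> (3::complex) \<and> dist x' 3 < e"
    by (intro bexI[of _ "complex_of_real (3+d)"]) (use d in \<open>auto simp: dist_norm complex_eq_iff\<close>)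
qed

lemma G0_fe: "z \<in> Om \<Longrightarrow> (G0 z)^2 - z * G0 z + 1 = 0"
proof -
  assume z: "z \<in> Om"
  show ?thesis
  proof (rule analytic_continuation[where f = "\<lambda>z. (G0 z)^2 - z * G0 z + 1" and S = Om and U = "of_real ` {2<..}" and \<xi> = 3])
    show "(\<lambda>z. (G0 z)^2 - z * G0 z + 1) holomorphic_on Om"
      using G0_holo by (intro holomorphic_intros)
    show "open Om" by (rule open_Om)
    show "connected Om" by (rule connected_Om)
    show "of_real ` {2<..} \<subseteq> Om" by (auto simp: Om_def)
    show "(3::complex) \<in> Om" by (simp add: Om_def)
    show "(3::complex) islimpt (of_real ` {2<..})" by (rule three_limpt)
    show "z \<in> Om" by (rule z)
  next
    fix u :: complex assume "u \<in> of_real ` {(2::real)<..}"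
    then obtain w where w: "w > 2" "u = of_real w" by auto
    have "\<bar>w\<bar> \<ge> 2" using w by simp
    then have "G0 u = of_real (gr w)" using G0_real w by simp
    moreover have "complex_of_real ((gr w)^2 - w * gr w + 1) = 0" using gr_fe[OF w(1)] by simp
    ultimately show "(G0 u)^2 - u * G0 u + 1 = 0" using w by simp
  qed
qed

lemma G0_props:
  assumes z: "Im z > 0"
  shows "G0 z \<noteq> 0" "Im (G0 z) \<noteq> 0" "z = G0 z + 1 / G0 z" "recip_cauchy semicircle z = z - G0 z"
proof -
  have fe: "(G0 z)^2 - z * G0 z + 1 = 0" using G0_fe z by (auto simp: Om_def)
  show nz: "G0 z \<noteq> 0" using fe by auto
  show zg: "z = G0 z + 1 / G0 z" using fe nz by (simp add: field_simps power2_eq_square)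
  show "Im (G0 z) \<noteq> 0"
  proof
    assume "Im (G0 z) = 0"
    then have "G0 z = of_real (Re (G0 z))" by (simp add: complex_eq_iff)
    then have "Im (G0 z + 1 / G0 z) = 0" by (metis Im_complex_of_real of_real_add of_real_divide of_real_1)
    then show False using zg z by simp
  qed
  show "recip_cauchy semicircle z = z - G0 z"
    unfolding recip_cauchy_def G0_def[symmetric] using zg nz by (simp add: field_simps)
qed

definition q :: "real \<Rightarrow> real" where
  "q x = (if \<bar>x\<bar> > 1 then 1 - 1 / x^2 else 0)"

definition phi :: "real \<Rightarrow> real" where
  "phi x = x + 1 / x"

lemma q_nonneg: "0 \<le> q x"
proof (cases "\<bar>x\<bar> > 1")
  case True
  then have "1 < x^2" using power_strict_mono[of 1 "\<bar>x\<bar>" 2] by simp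
  then have "inverse (x^2) \<le> 1" by (simp add: inverse_le_1_iff)
  then have "1 / x^2 \<le> 1" by (simp add: inverse_eq_divide)
  then show ?thesis using True by (simp add: q_def)
qed (simp add: q_def)

lemma pf_alg:
  fixes S X W T Z :: complex
  assumes "X \<noteq> 0" "W \<noteq> T" "Z \<noteq> T" "Z \<noteq> W"
  shows "S / (X * (W - T)) * (1 / (Z - T)) = 1 / (X * (Z - W)) * (S / (W - T) - S * (1 / (Z - T)))"
proof -
  define A where "A = W - T"
  define B where "B = Z - T"
  define D where "D = Z - W"
  have nz: "A \<noteq> 0" "B \<noteq> 0" "D \<noteq> 0" using assms by (auto simp: A_def B_def D_def)
  have dBA: "D = B - A" by (simp add: A_def B_def D_def)
  have e1: "S / A - S * (1 / B) = S * (B - A) / (A * B)" using nz by (simp add: field_simps)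
  have e2: "1 / (X * D) * (S * D / (A * B)) = S / (X * A) * (1 / B)" using nz assms(1) by (simp add: field_simps)
  show ?thesis unfolding A_def[symmetric] B_def[symmetric] D_def[symmetric] e1 dBA[symmetric] e2 ..
qed

lemma K_xw: "x \<noteq> 0 \<Longrightarrow> K x t = sd t / (x * (phi x - t))"
proof -
  assume x: "x \<noteq> 0"
  have "1 - t * x + x^2 = x * (phi x - t)" using x by (simp add: phi_def field_simps power2_eq_square)
  then show ?thesis unfolding K_def by simp
qed

lemma phi_abs: "x \<noteq> 0 \<Longrightarrow> \<bar>phi x\<bar> \<ge> 2"
  unfolding phi_def by (rule xinv_abs)

lemma sd_ne0: "sd t \<noteq> 0 \<Longrightarrow> \<bar>t\<bar> < 2"
proof -
  assume s: "sd t \<noteq> 0"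
  then have t: "t \<in> {-2..2}" using sd_out by blast
  have "t \<noteq> 2" "t \<noteq> -2" using s by (auto simp: sd_def)
  then show ?thesis using t by auto
qed

lemma Kc_int:
  assumes z: "Im z > 0"
  shows "integrable lborel (\<lambda>t. complex_of_real (K x t) * (1 / (z - of_real t)))"
proof (rule Bochner_Integration.integrable_bound[where f = "\<lambda>t. K x t / Im z"])
  show "integrable lborel (\<lambda>t. K x t / Im z)" using K_int(1) by simp
  show "(\<lambda>t. complex_of_real (K x t) * (1 / (z - of_real t))) \<in> borel_measurable lborel" by measurable
  show "AE t in lborel. norm (complex_of_real (K x t) * (1 / (z - of_real t))) \<le> norm (K x t / Im z)"
  proof (intro AE_I2)
    fix t :: real
    have i: "Im z \<le> norm (z - of_real t)" using abs_Im_le_cmod[of "z - of_real t"] z by simp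
    have n: "0 < norm (z - of_real t)" using i z by linarith
    have "norm (complex_of_real (K x t) * (1 / (z - of_real t))) = K x t / norm (z - of_real t)"
      using K_nonneg[of x t] by (simp add: norm_mult norm_divide)
    also have "\<dots> \<le> K x t / Im z" using i z K_nonneg[of x t] n by (intro divide_left_mono) auto
    finally show "norm (complex_of_real (K x t) * (1 / (z - of_real t))) \<le> norm (K x t / Im z)"
      using K_nonneg[of x t] z by simp
  qed
qed

lemma Kc_pf:
  assumes z: "Im z > 0" and x: "x \<noteq> 0"
  shows "integral\<^sup>L lborel (\<lambda>t. complex_of_real (K x t) * (1 / (z - of_real t)))
       = 1 / (of_real x * (z - of_real (phi x))) * (of_real (Gr x) - G0 z)"
proof -
  define c where "c = 1 / (of_real x * (z - of_real (phi x)))"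
  have pw: "complex_of_real (K x t) * (1 / (z - of_real t))
      = c * (complex_of_real (sd t / (phi x - t)) - complex_of_real (sd t) * (1 / (z - of_real t)))" for t
  proof (cases "sd t = 0")
    case True
    then show ?thesis by (simp add: K_def)
  next
    case False
    then have t: "\<bar>t\<bar> < 2" by (rule sd_ne0)
    have "phi x \<noteq> t" using phi_abs[OF x] t by auto
    then have a: "complex_of_real (phi x) \<noteq> of_real t" by simp
    have b: "z \<noteq> of_real t" using z by auto
    have d: "z \<noteq> of_real (phi x)" using z by auto
    have "complex_of_real (K x t) = of_real (sd t) / (of_real x * (of_real (phi x) - of_real t))"
      unfolding K_xw[OF x] by simp
    then show ?thesis unfolding c_def using pf_alg[of "of_real x" "of_real (phi x)" "of_real t" z "of_real (sd t)"] a b d x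
      by simp
  qed
  have i1: "integrable lborel (\<lambda>t. complex_of_real (sd t / (phi x - t)))"
    using integrable_of_real[OF wlint(1)[OF phi_abs[OF x]]] .
  have i2: "integrable lborel (\<lambda>t. complex_of_real (sd t) * (1 / (z - of_real t)))"
    using G0_int[of z] z by (simp add: Om_def)
  have "integral\<^sup>L lborel (\<lambda>t. complex_of_real (K x t) * (1 / (z - of_real t)))
      = integral\<^sup>L lborel (\<lambda>t. c * (complex_of_real (sd t / (phi x - t)) - complex_of_real (sd t) * (1 / (z - of_real t))))"
    using pw by simp
  also have "\<dots> = c * (integral\<^sup>L lborel (\<lambda>t. complex_of_real (sd t / (phi x - t))) - G0 z)"
    unfolding G0_lborel using i1 i2 by simp
  also have "integral\<^sup>L lborel (\<lambda>t. complex_of_real (sd t / (phi x - t))) = of_real (integral\<^sup>L lborel (\<lambda>t. sd t / (phi x - t)))"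
    by (rule integral_complex_of_real)
  also have "integral\<^sup>L lborel (\<lambda>t. sd t / (phi x - t)) = Gr x"
    using wlint(2)[OF phi_abs[OF x]] gr_xinv[OF x] by (simp add: phi_def)
  finally show ?thesis unfolding c_def .
qed

lemma zw_fact:
  fixes g x :: complex assumes "g \<noteq> 0" "x \<noteq> 0"
  shows "(g + 1/g) - (x + 1/x) = (g - x) * (g * x - 1) / (g * x)"
  using assms by (simp add: field_simps)

lemma alg_small:
  fixes g x :: complex assumes g: "g \<noteq> 0" and x: "x \<noteq> 0" and "g \<noteq> x" "g * x \<noteq> 1"
  shows "1 / (x * ((g + 1/g) - (x + 1/x))) * (x - g) = 1 / ((g + 1/g) - g - x)"
proof -
  define a where "a = g - x"
  define b where "b = g * x - 1"
  have nz: "a \<noteq> 0" "b \<noteq> 0" using assms by (auto simp: a_def b_def)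
  have e1: "(g + 1/g) - (x + 1/x) = a * b / (g * x)" unfolding a_def b_def by (rule zw_fact[OF g x])
  have e2: "x - g = - a" by (simp add: a_def)
  have e3: "(g + 1/g) - g - x = - b / g" using g by (simp add: b_def field_simps)
  show ?thesis unfolding e1 e2 e3 using nz g x by (simp add: field_simps)
qed

lemma alg_big:
  fixes g x :: complex assumes g: "g \<noteq> 0" and x: "x \<noteq> 0" and "g \<noteq> x" "g * x \<noteq> 1"
  shows "1 / (x * ((g + 1/g) - (x + 1/x))) * (1/x - g) + (1 - 1/x^2) / ((g + 1/g) - (x + 1/x))
       = 1 / ((g + 1/g) - g - x)"
proof -
  define a where "a = g - x"
  define b where "b = g * x - 1"
  have nz: "a \<noteq> 0" "b \<noteq> 0" using assms by (auto simp: a_def b_def)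
  have e1: "(g + 1/g) - (x + 1/x) = a * b / (g * x)" unfolding a_def b_def by (rule zw_fact[OF g x])
  have e3: "(g + 1/g) - g - x = - b / g" using g by (simp add: b_def field_simps)
  have e4: "1/x - g = - b / x" using x by (simp add: b_def field_simps)
  have e5: "1 - 1/x^2 = (x*x - 1) / (x*x)" using x by (simp add: field_simps power2_eq_square)
  have key: "x * x - 1 - b = - a * x" by (simp add: a_def b_def algebra_simps)
  have "1 / (x * (a * b / (g * x))) * (- b / x) + (x*x - 1) / (x*x) / (a * b / (g * x))
      = g * ((x * x - 1) - b) / (a * b * x)"
    using nz g x by (simp add: field_simps)
  also have "\<dots> = - g / b" unfolding key using nz g x by (simp add: field_simps)
  finally show ?thesis unfolding e1 e3 e4 e5 using nz g x by (simp add: field_simps)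
qed

lemma rho_ct:
  assumes z: "Im z > 0"
  shows "integral\<^sup>L lborel (\<lambda>t. complex_of_real (K x t) * (1 / (z - of_real t)))
        + of_real (q x) / (z - of_real (phi x)) = 1 / (z - G0 z - of_real x)"
proof -
  note gp = G0_props[OF z]
  define g where "g = G0 z"
  have g0: "g \<noteq> 0" and gim: "Im g \<noteq> 0" and zg: "z = g + 1/g" using gp unfolding g_def by auto
  show ?thesis
  proof (cases "x = 0")
    case True
    have "K x = sd" using True by (simp add: K_def fun_eq_iff)
    then have "integral\<^sup>L lborel (\<lambda>t. complex_of_real (K x t) * (1 / (z - of_real t))) = g"
      unfolding g_def G0_lborel by simp
    moreover have "q x = 0" using True by (simp add: q_def)
    ultimately show ?thesis using True g0 zg unfolding g_def[symmetric] by simp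
  next
    case False
    have xc: "complex_of_real x \<noteq> 0" using False by simp
    have gx: "g \<noteq> of_real x" using gim by auto
    have gx1: "g * of_real x \<noteq> 1"
    proof
      assume "g * of_real x = 1"
      then have "Im (g * of_real x) = 0" by simp
      then show False using gim False by simp
    qed
    have ph: "complex_of_real (phi x) = of_real x + 1 / of_real x" by (simp add: phi_def)
    note pf = Kc_pf[OF z False]
    show ?thesis
    proof (cases "\<bar>x\<bar> \<le> 1")
      case True
      then have "Gr x = x" "q x = 0" by (auto simp: Gr_def q_def)
      then show ?thesis unfolding pf g_def[symmetric] using alg_small[OF g0 xc gx gx1] zg ph by simp
    next
      case c: False
      then have "Gr x = 1 / x" "q x = 1 - 1 / x^2" by (auto simp: Gr_def q_def)
      then show ?thesis unfolding pf g_def[symmetric] using alg_big[OF g0 xc gx gx1] zg ph by simp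
    qed
  qed
qed

definition D :: "real \<Rightarrow> real \<Rightarrow> real" where
  "D x u = K x u + indicator {3..4} u * q x"

definition Psi :: "real \<Rightarrow> real \<Rightarrow> real" where
  "Psi x u = (if u \<in> {3..4} then phi x else u)"

definition Cm :: "real measure \<Rightarrow> real measure" where
  "Cm \<mu> = distr (density (\<mu> \<Otimes>\<^sub>M lborel) (\<lambda>p. ennreal (D (fst p) (snd p)))) borel (\<lambda>p. Psi (fst p) (snd p))"

lemma q_meas[measurable]: "q \<in> borel_measurable borel"
  unfolding q_def by measurable

lemma phi_meas[measurable]: "phi \<in> borel_measurable borel"
  unfolding phi_def by measurable

lemma D_meas[measurable]:
  assumes [measurable]: "f \<in> borel_measurable M" "g \<in> borel_measurable M"
  shows "(\<lambda>p. D (f p) (g p)) \<in> borel_measurable M"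
  unfolding D_def by measurable

lemma Psi_meas[measurable]:
  assumes [measurable]: "f \<in> borel_measurable M" "g \<in> borel_measurable M"
  shows "(\<lambda>p. Psi (f p) (g p)) \<in> borel_measurable M"
  unfolding Psi_def by measurable

lemma D_nonneg: "0 \<le> D x u"
  unfolding D_def using K_nonneg[of x u] q_nonneg[of x] by (simp add: indicator_def)

lemma K_34: "u \<in> {3..4} \<Longrightarrow> K x u = 0"
  unfolding K_def using sd_out[of u] by auto

lemma D_split: "ennreal (D x u) * f (Psi x u) = ennreal (K x u) * f u + indicator {3..4} u * (ennreal (q x) * f (phi x))"
proof (cases "u \<in> {3..4}")
  case True
  then show ?thesis using K_34[OF True] by (simp add: D_def Psi_def)
next
  case False
  then show ?thesis by (auto simp: D_def Psi_def indicator_def)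
qed

lemma emeasure_34: "emeasure lborel {3..4::real} = 1"
  by simp

lemma D_inner:
  assumes [measurable]: "f \<in> borel_measurable borel"
  shows "(\<integral>\<^sup>+u. ennreal (D x u) * f (Psi x u) \<partial>lborel) = (\<integral>\<^sup>+u. ennreal (K x u) * f u \<partial>lborel) + ennreal (q x) * f (phi x)"
proof -
  have "(\<integral>\<^sup>+u. ennreal (D x u) * f (Psi x u) \<partial>lborel)
      = (\<integral>\<^sup>+u. ennreal (K x u) * f u + indicator {3..4::real} u * (ennreal (q x) * f (phi x)) \<partial>lborel)"
    by (simp add: D_split)
  also have "\<dots> = (\<integral>\<^sup>+u. ennreal (K x u) * f u \<partial>lborel) + (\<integral>\<^sup>+u. indicator {3..4::real} u * (ennreal (q x) * f (phi x)) \<partial>lborel)"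
    by (rule nn_integral_add) auto
  also have "(\<integral>\<^sup>+u. indicator {3..4::real} u * (ennreal (q x) * f (phi x)) \<partial>lborel) = ennreal (q x) * f (phi x)"
    by (simp add: nn_integral_cmult_indicator mult.commute)
  finally show ?thesis .
qed

lemma D_total: "(\<integral>\<^sup>+u. ennreal (D x u) \<partial>lborel) = 1"
proof -
  have "(\<integral>\<^sup>+u. ennreal (D x u) \<partial>lborel) = (\<integral>\<^sup>+u. ennreal (D x u) * (\<lambda>_. 1) (Psi x u) \<partial>lborel)" by simp
  also have "\<dots> = (\<integral>\<^sup>+u. ennreal (K x u) \<partial>lborel) + ennreal (q x)"
    by (subst D_inner) auto
  also have "\<dots> = ennreal (mK x + q x)" using K_nnint[of x] q_nonneg[of x]
    by (simp add: ennreal_plus mK_def)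
  also have "mK x + q x = 1" by (simp add: mK_def q_def)
  finally show ?thesis by simp
qed

context
  fixes \<mu> :: "real measure"
  assumes prob: "prob_space \<mu>" and sets_mu[measurable_cong]: "sets \<mu> = sets borel"
begin

interpretation PS: pair_sigma_finite \<mu> lborel
proof -
  have "sigma_finite_measure \<mu>" using prob by (simp add: prob_space_imp_sigma_finite)
  then show "pair_sigma_finite \<mu> lborel"
    by (simp add: pair_sigma_finite_def lborel.sigma_finite_measure_axioms)
qed

lemma Cm_nn:
  assumes [measurable]: "f \<in> borel_measurable borel"
  shows "(\<integral>\<^sup>+y. f y \<partial>Cm \<mu>) = (\<integral>\<^sup>+x. (\<integral>\<^sup>+u. ennreal (K x u) * f u \<partial>lborel) + ennreal (q x) * f (phi x) \<partial>\<mu>)"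
proof -
  have "(\<integral>\<^sup>+y. f y \<partial>Cm \<mu>) = (\<integral>\<^sup>+p. f (Psi (fst p) (snd p)) \<partial>density (\<mu> \<Otimes>\<^sub>M lborel) (\<lambda>p. ennreal (D (fst p) (snd p))))"
    unfolding Cm_def by (rule nn_integral_distr) auto
  also have "\<dots> = (\<integral>\<^sup>+p. ennreal (D (fst p) (snd p)) * f (Psi (fst p) (snd p)) \<partial>(\<mu> \<Otimes>\<^sub>M lborel))"
    by (rule nn_integral_density) auto
  also have "\<dots> = (\<integral>\<^sup>+x. \<integral>\<^sup>+u. ennreal (D x u) * f (Psi x u) \<partial>lborel \<partial>\<mu>)"
  proof -
    have m: "(\<lambda>p. ennreal (D (fst p) (snd p)) * f (Psi (fst p) (snd p))) \<in> borel_measurable (\<mu> \<Otimes>\<^sub>M lborel)"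
      by measurable
    show ?thesis using lborel.nn_integral_fst[OF m] by simp
  qed
  also have "\<dots> = (\<integral>\<^sup>+x. (\<integral>\<^sup>+u. ennreal (K x u) * f u \<partial>lborel) + ennreal (q x) * f (phi x) \<partial>\<mu>)"
    by (simp add: D_inner)
  finally show ?thesis .
qed

lemma sets_Cm[simp]: "sets (Cm \<mu>) = sets borel"
  unfolding Cm_def by simp

lemma prob_Cm: "prob_space (Cm \<mu>)"
proof (rule prob_spaceI)
  have "emeasure (Cm \<mu>) (space (Cm \<mu>)) = (\<integral>\<^sup>+y. 1 \<partial>Cm \<mu>)"
    by simp
  also have "\<dots> = (\<integral>\<^sup>+x. (\<integral>\<^sup>+u. ennreal (K x u) * 1 \<partial>lborel) + ennreal (q x) * 1 \<partial>\<mu>)"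
    by (rule Cm_nn) auto
  also have "\<dots> = (\<integral>\<^sup>+x. 1 \<partial>\<mu>)"
  proof (rule nn_integral_cong)
    fix x
    have "(\<integral>\<^sup>+u. ennreal (K x u) * 1 \<partial>lborel) + ennreal (q x) * 1 = ennreal (mK x + q x)"
      using K_nnint[of x] q_nonneg[of x] by (simp add: ennreal_plus mK_def)
    also have "mK x + q x = 1" by (simp add: mK_def q_def)
    finally show "(\<integral>\<^sup>+u. ennreal (K x u) * 1 \<partial>lborel) + ennreal (q x) * 1 = 1" by simp
  qed
  also have "\<dots> = 1" using prob by (simp add: prob_space.emeasure_space_1)
  finally show "emeasure (Cm \<mu>) (space (Cm \<mu>)) = 1" .
qed

end

lemma D_split_c:
  "complex_of_real (D x u) * c (Psi x u) = complex_of_real (K x u) * c u + complex_of_real (indicator {3..4} u) * (complex_of_real (q x) * c (phi x))"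
proof (cases "u \<in> {3..4}")
  case True
  then show ?thesis using K_34[OF True] by (simp add: D_def Psi_def)
next
  case False
  then show ?thesis by (auto simp: D_def Psi_def indicator_def)
qed

lemma inner_ct:
  assumes z: "Im z > 0"
  shows "integrable lborel (\<lambda>u. complex_of_real (D x u) * (1 / (z - of_real (Psi x u))))"
    "integral\<^sup>L lborel (\<lambda>u. complex_of_real (D x u) * (1 / (z - of_real (Psi x u)))) = 1 / (z - G0 z - of_real x)"
proof -
  have i1: "integrable lborel (\<lambda>u. complex_of_real (K x u) * (1 / (z - of_real u)))" by (rule Kc_int[OF z])
  have i2: "integrable lborel (\<lambda>u. complex_of_real (indicator {3..4::real} u) * (complex_of_real (q x) * (1 / (z - of_real (phi x)))))"
  proof -
    have "integrable lborel (\<lambda>u. indicator {3..4::real} u *\<^sub>R (complex_of_real (q x) * (1 / (z - of_real (phi x)))))"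
      by (intro integrable_scaleR_left integrable_real_indicator) auto
    then show ?thesis by (simp add: scaleR_conv_of_real)
  qed
  have e: "(\<lambda>u. complex_of_real (D x u) * (1 / (z - of_real (Psi x u)))) =
     (\<lambda>u. complex_of_real (K x u) * (1 / (z - of_real u)) + complex_of_real (indicator {3..4::real} u) * (complex_of_real (q x) * (1 / (z - of_real (phi x)))))"
    using D_split_c[of x _ "\<lambda>y. 1 / (z - of_real y)"] by auto
  show "integrable lborel (\<lambda>u. complex_of_real (D x u) * (1 / (z - of_real (Psi x u))))"
    unfolding e using i1 i2 by auto
  have "integral\<^sup>L lborel (\<lambda>u. complex_of_real (indicator {3..4::real} u) * (complex_of_real (q x) * (1 / (z - of_real (phi x)))))
      = of_real (q x) / (z - of_real (phi x))"
  proof -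
    have "integral\<^sup>L lborel (\<lambda>u. complex_of_real (indicator {3..4::real} u) * (complex_of_real (q x) * (1 / (z - of_real (phi x)))))
       = integral\<^sup>L lborel (\<lambda>u. complex_of_real (indicator {3..4::real} u)) * (complex_of_real (q x) * (1 / (z - of_real (phi x))))"
      by (rule integral_mult_left_zero)
    also have "integral\<^sup>L lborel (\<lambda>u. complex_of_real (indicator {3..4::real} u)) = 1"
      by (simp del: integral_complex_of_real add: integral_complex_of_real[of lborel "indicator {3..4::real}"] measure_def)
    finally show ?thesis by simp
  qed
  then show "integral\<^sup>L lborel (\<lambda>u. complex_of_real (D x u) * (1 / (z - of_real (Psi x u)))) = 1 / (z - G0 z - of_real x)"
    unfolding e using i1 i2 rho_ct[OF z, of x] by simp
qed

context
  fixes \<mu> :: "real measure"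
  assumes prob: "prob_space \<mu>" and sets_mu[measurable_cong]: "sets \<mu> = sets borel"
begin

interpretation PS: pair_sigma_finite \<mu> lborel
proof -
  have "sigma_finite_measure \<mu>" using prob by (simp add: prob_space_imp_sigma_finite)
  then show "pair_sigma_finite \<mu> lborel"
    by (simp add: pair_sigma_finite_def lborel.sigma_finite_measure_axioms)
qed

lemma Cm_ct:
  assumes z: "Im z > 0"
  shows "cauchy_transform (Cm \<mu>) z = cauchy_transform \<mu> (z - G0 z)"
proof -
  let ?g = "\<lambda>y::real. 1 / (z - complex_of_real y)"
  let ?F = "\<lambda>p. complex_of_real (D (fst p) (snd p)) * ?g (Psi (fst p) (snd p))"
  have gb: "norm (?g y) \<le> 1 / Im z" for y
  proof -
    have i: "Im z \<le> norm (z - of_real y)" using abs_Im_le_cmod[of "z - of_real y"] z by simp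
    then show ?thesis using z by (simp add: norm_divide divide_le_eq_1 field_simps)
  qed
  have Fm: "?F \<in> borel_measurable (\<mu> \<Otimes>\<^sub>M lborel)" by measurable
  have Fint: "integrable (\<mu> \<Otimes>\<^sub>M lborel) ?F"
  proof (rule integrableI_bounded[OF Fm])
    have "(\<integral>\<^sup>+p. ennreal (norm (?F p)) \<partial>(\<mu> \<Otimes>\<^sub>M lborel)) \<le> (\<integral>\<^sup>+p. ennreal (D (fst p) (snd p)) * ennreal (1 / Im z) \<partial>(\<mu> \<Otimes>\<^sub>M lborel))"
    proof (rule nn_integral_mono)
      fix p
      have "norm (?F p) = D (fst p) (snd p) * norm (?g (Psi (fst p) (snd p)))"
        by (simp only: norm_mult norm_of_real abs_of_nonneg[OF D_nonneg])
      also have "\<dots> \<le> D (fst p) (snd p) * (1 / Im z)" using gb D_nonneg by (intro mult_left_mono) auto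
      finally show "ennreal (norm (?F p)) \<le> ennreal (D (fst p) (snd p)) * ennreal (1 / Im z)"
        using D_nonneg z by (simp add: ennreal_mult'[symmetric] ennreal_leI)
    qed
    also have "\<dots> = (\<integral>\<^sup>+p. ennreal (D (fst p) (snd p)) \<partial>(\<mu> \<Otimes>\<^sub>M lborel)) * ennreal (1 / Im z)"
      by (rule nn_integral_multc) measurable
    also have "(\<integral>\<^sup>+p. ennreal (D (fst p) (snd p)) \<partial>(\<mu> \<Otimes>\<^sub>M lborel)) = (\<integral>\<^sup>+x. \<integral>\<^sup>+u. ennreal (D x u) \<partial>lborel \<partial>\<mu>)"
    proof -
      have m: "(\<lambda>p. ennreal (D (fst p) (snd p))) \<in> borel_measurable (\<mu> \<Otimes>\<^sub>M lborel)" by measurable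
      show ?thesis using lborel.nn_integral_fst[OF m] by simp
    qed
    also have "\<dots> = (\<integral>\<^sup>+x. 1 \<partial>\<mu>)" by (simp add: D_total)
    also have "\<dots> = 1" using prob by (simp add: prob_space.emeasure_space_1)
    finally show "(\<integral>\<^sup>+p. ennreal (norm (?F p)) \<partial>(\<mu> \<Otimes>\<^sub>M lborel)) < \<infinity>"
      by (simp add: ennreal_mult_less_top order.strict_trans1)
  qed
  have "cauchy_transform (Cm \<mu>) z = integral\<^sup>L (Cm \<mu>) ?g" unfolding cauchy_transform_def ..
  also have "\<dots> = integral\<^sup>L (density (\<mu> \<Otimes>\<^sub>M lborel) (\<lambda>p. ennreal (D (fst p) (snd p)))) (\<lambda>p. ?g (Psi (fst p) (snd p)))"
    unfolding Cm_def by (rule integral_distr) auto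
  also have "\<dots> = integral\<^sup>L (\<mu> \<Otimes>\<^sub>M lborel) (\<lambda>p. D (fst p) (snd p) *\<^sub>R ?g (Psi (fst p) (snd p)))"
    by (rule integral_density) (auto simp: D_nonneg)
  also have "\<dots> = integral\<^sup>L (\<mu> \<Otimes>\<^sub>M lborel) ?F" by (simp add: scaleR_conv_of_real)
  also have "\<dots> = (\<integral>x. (\<integral>u. ?F (x, u) \<partial>lborel) \<partial>\<mu>)" by (rule PS.integral_fst'[OF Fint, symmetric])
  also have "\<dots> = (\<integral>x. 1 / (z - G0 z - of_real x) \<partial>\<mu>)"
    using inner_ct(2)[OF z] by simp
  also have "\<dots> = cauchy_transform \<mu> (z - G0 z)" unfolding cauchy_transform_def ..
  finally show ?thesis .
qed

end

lemma real_Suc_at_top: "filterlim (\<lambda>n::nat. real (Suc n)) at_top sequentially"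
  using filterlim_sequentially_Suc[of "\<lambda>n. real n" at_top] filterlim_real_sequentially by simp

lemma lim_arctan_scale: "(\<lambda>n::nat. arctan (y * real (Suc n))) \<longlonglongrightarrow> pi/2 * sgn y"
proof -
  have pos: "(\<lambda>n::nat. arctan (c * real (Suc n))) \<longlonglongrightarrow> pi/2" if c: "c > 0" for c :: real
  proof -
    have "filterlim (\<lambda>n::nat. c * real (Suc n)) at_top sequentially"
      by (rule filterlim_tendsto_pos_mult_at_top[OF tendsto_const c real_Suc_at_top])
    then show ?thesis by (rule filterlim_compose[OF tendsto_arctan_at_top])
  qed
  consider "y > 0" | "y = 0" | "y < 0" by linarith
  then show ?thesis
  proof cases
    case 1 then show ?thesis using pos[OF 1] by simp
  next
    case 2 then show ?thesis by simp
  next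
    case 3
    have "(\<lambda>n::nat. - arctan ((-y) * real (Suc n))) \<longlonglongrightarrow> - (pi/2)"
      using pos[of "-y"] 3 by (intro tendsto_minus) auto
    then show ?thesis using 3 by (simp add: arctan_minus)
  qed
qed

definition Phi :: "real \<Rightarrow> real \<Rightarrow> real \<Rightarrow> real \<Rightarrow> real" where
  "Phi a b s x = (arctan ((b - x) / s) - arctan ((a - x) / s)) / pi"

definition psi :: "real \<Rightarrow> real \<Rightarrow> real \<Rightarrow> real" where
  "psi a b x = (sgn (b - x) - sgn (a - x)) / 2"

lemma Phi_lim: "(\<lambda>n::nat. Phi a b (1 / real (Suc n)) x) \<longlonglongrightarrow> psi a b x"
proof -
  have "(\<lambda>n::nat. (arctan ((b - x) * real (Suc n)) - arctan ((a - x) * real (Suc n))) / pi)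
      \<longlonglongrightarrow> (pi/2 * sgn (b - x) - pi/2 * sgn (a - x)) / pi"
    by (intro tendsto_intros lim_arctan_scale) simp
  moreover have "(pi/2 * sgn (b - x) - pi/2 * sgn (a - x)) / pi = psi a b x"
    by (simp add: psi_def field_simps)
  ultimately show ?thesis by (simp add: Phi_def)
qed

lemma Phi_bound: "\<bar>Phi a b s x\<bar> \<le> 1"
proof -
  have "\<bar>arctan ((b - x) / s) - arctan ((a - x) / s)\<bar> \<le> pi"
    using arctan_bounded[of "(b - x) / s"] arctan_bounded[of "(a - x) / s"] by linarith
  then show ?thesis by (simp add: Phi_def abs_divide)
qed

lemma Phi_meas[measurable]: "Phi a b s \<in> borel_measurable borel"
  unfolding Phi_def by measurable

lemma psi_meas[measurable]: "psi a b \<in> borel_measurable borel"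
  unfolding psi_def by measurable

lemma poisson_int:
  assumes s: "s > 0" and ab: "a \<le> b"
  shows "integrable lborel (\<lambda>t. indicator {a..b} t * (s / (pi * ((t - x)^2 + s^2))))"
    "integral\<^sup>L lborel (\<lambda>t. indicator {a..b} t * (s / (pi * ((t - x)^2 + s^2)))) = Phi a b s x"
proof -
  define F where "F t = arctan ((t - x) / s) / pi" for t
  have hi: "((\<lambda>t. s / (pi * ((t - x)^2 + s^2))) has_integral (F b - F a)) {a..b}"
  proof (rule fundamental_theorem_of_calculus_interior[OF ab])
    show "continuous_on {a..b} F" unfolding F_def by (intro continuous_intros) (use s in auto)
  next
    fix t assume "t \<in> {a<..<b}"
    have d: "(F has_real_derivative (inverse (1 + ((t - x) / s)^2) * (1 / s)) / pi) (at t)"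
      unfolding F_def using s by (auto intro!: derivative_eq_intros DERIV_arctan)
    have "(inverse (1 + ((t - x) / s)^2) * (1 / s)) / pi = s / (pi * ((t - x)^2 + s^2))"
    proof -
      have "1 + ((t - x) / s)^2 = ((t - x)^2 + s^2) / s^2" using s by (simp add: field_simps power2_eq_square)
      moreover have "(t - x)^2 + s^2 > 0" using s by (simp add: add_nonneg_pos)
      ultimately show ?thesis using s by (simp add: field_simps power2_eq_square)
    qed
    then have "(F has_real_derivative s / (pi * ((t - x)^2 + s^2))) (at t)" using d by simp
    then show "(F has_vector_derivative s / (pi * ((t - x)^2 + s^2))) (at t)"
      by (simp add: has_real_derivative_iff_has_vector_derivative)
  qed
  have nn: "\<And>t. t \<in> {a..b} \<Longrightarrow> 0 \<le> s / (pi * ((t - x)^2 + s^2))"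
  proof -
    fix t
    have "0 < (t - x)^2 + s^2" using s by (simp add: add_nonneg_pos)
    then show "0 \<le> s / (pi * ((t - x)^2 + s^2))" using s by simp
  qed
  have m: "(\<lambda>t. indicator {a..b} t * (s / (pi * ((t - x)^2 + s^2)))) \<in> borel_measurable borel" by measurable
  note h = hk_to_lborel[OF hi nn m]
  show "integrable lborel (\<lambda>t. indicator {a..b} t * (s / (pi * ((t - x)^2 + s^2))))" by (rule h(1))
  show "integral\<^sup>L lborel (\<lambda>t. indicator {a..b} t * (s / (pi * ((t - x)^2 + s^2)))) = Phi a b s x"
    using h(2) by (simp add: F_def Phi_def diff_divide_distrib)
qed

context
  fixes M :: "real measure"
  assumes prob: "prob_space M" and sets_M[measurable_cong]: "sets M = sets borel"
begin

interpretation PS: pair_sigma_finite M lborel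
proof -
  have "sigma_finite_measure M" using prob by (simp add: prob_space_imp_sigma_finite)
  then show "pair_sigma_finite M lborel"
    by (simp add: pair_sigma_finite_def lborel.sigma_finite_measure_axioms)
qed

interpretation FM: finite_measure M using prob by (simp add: prob_space_def)

lemma im_ct:
  assumes s: "s > 0"
  shows "Im (cauchy_transform M (Complex t s)) = - integral\<^sup>L M (\<lambda>x. s / ((t - x)^2 + s^2))"
proof -
  have b: "norm (1 / (Complex t s - of_real x)) \<le> 1 / s" for x
  proof -
    have "s \<le> norm (Complex t s - of_real x)" using abs_Im_le_cmod[of "Complex t s - of_real x"] s by simp
    then show ?thesis using s by (simp add: norm_divide divide_le_eq_1 field_simps)
  qed
  have int: "integrable M (\<lambda>x. 1 / (Complex t s - of_real x))"
    by (rule FM.integrable_const_bound[where B = "1/s"]) (use b in auto)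
  have pw: "Im (1 / (Complex t s - of_real x)) = - (s / ((t - x)^2 + s^2))" for x
  proof -
    have "Complex t s - of_real x = Complex (t - x) s" by (simp add: complex_eq_iff)
    then show ?thesis by (simp add: Im_divide power2_eq_square)
  qed
  have "Im (cauchy_transform M (Complex t s)) = integral\<^sup>L M (\<lambda>x. Im (1 / (Complex t s - of_real x)))"
    unfolding cauchy_transform_def using integral_Im[OF int] by simp
  also have "\<dots> = integral\<^sup>L M (\<lambda>x. - (s / ((t - x)^2 + s^2)))" by (simp only: pw)
  finally show ?thesis by simp
qed

lemma I_eq:
  assumes s: "s > 0" and ab: "a \<le> b"
  shows "integral\<^sup>L M (Phi a b s) = integral\<^sup>L lborel (\<lambda>t. indicator {a..b} t * (- Im (cauchy_transform M (Complex t s)) / pi))"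
proof -
  define F where "F x t = indicator {a..b} t * (s / (pi * ((t - x)^2 + s^2)))" for x t
  have Fm[measurable]: "(\<lambda>p. F (fst p) (snd p)) \<in> borel_measurable (M \<Otimes>\<^sub>M lborel)"
    unfolding F_def by measurable
  have Fb: "\<bar>F x t\<bar> \<le> indicator {a..b} t * (1 / (pi * s))" for x t
  proof -
    have p: "s^2 \<le> (t - x)^2 + s^2" by simp
    have p2: "0 < s^2" using s by simp
    have p3: "0 < (t - x)^2 + s^2" using p p2 by linarith
    have "s / (pi * ((t - x)^2 + s^2)) \<le> s / (pi * s^2)"
      using p p2 p3 s by (intro divide_left_mono mult_left_mono mult_pos_pos) auto
    also have "\<dots> = 1 / (pi * s)" using s by (simp add: power2_eq_square)
    finally have "s / (pi * ((t - x)^2 + s^2)) \<le> 1 / (pi * s)" .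
    moreover have "0 \<le> s / (pi * ((t - x)^2 + s^2))" using s p3 by (intro divide_nonneg_pos) auto
    ultimately show ?thesis by (auto simp: F_def indicator_def)
  qed
  have Fint: "integrable (M \<Otimes>\<^sub>M lborel) (\<lambda>(x, t). F x t)"
  proof -
    have "integrable (M \<Otimes>\<^sub>M lborel) (\<lambda>p. F (fst p) (snd p))"
    proof (rule integrableI_bounded[OF Fm])
      have "(\<integral>\<^sup>+p. ennreal (norm (F (fst p) (snd p))) \<partial>(M \<Otimes>\<^sub>M lborel))
          \<le> (\<integral>\<^sup>+p. ennreal (indicator {a..b} (snd p) * (1 / (pi * s))) \<partial>(M \<Otimes>\<^sub>M lborel))"
        using Fb by (intro nn_integral_mono ennreal_leI) auto
      also have "\<dots> = (\<integral>\<^sup>+x. \<integral>\<^sup>+t. ennreal (indicator {a..b} t * (1 / (pi * s))) \<partial>lborel \<partial>M)"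
      proof -
        have m: "(\<lambda>p. ennreal (indicator {a..b} (snd p) * (1 / (pi * s)))) \<in> borel_measurable (M \<Otimes>\<^sub>M lborel)" by measurable
        show ?thesis using lborel.nn_integral_fst[OF m] by simp
      qed
      also have "\<dots> = (\<integral>\<^sup>+x. ennreal ((b - a) * (1 / (pi * s))) \<partial>M)"
      proof (rule nn_integral_cong)
        fix x
        have "(\<integral>\<^sup>+t. ennreal (indicator {a..b} t * (1 / (pi * s))) \<partial>lborel) = (\<integral>\<^sup>+t. ennreal (1 / (pi * s)) * indicator {a..b} t \<partial>lborel)"
          by (intro nn_integral_cong) (auto simp: indicator_def)
        also have "\<dots> = ennreal (1 / (pi * s)) * emeasure lborel {a..b}" by (simp add: nn_integral_cmult_indicator)
        also have "\<dots> = ennreal (1 / (pi * s)) * ennreal (b - a)" using ab by simp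
        also have "\<dots> = ennreal (1 / (pi * s) * (b - a))" using ab s by (intro ennreal_mult[symmetric]) auto
        also have "\<dots> = ennreal ((b - a) * (1 / (pi * s)))" by (simp add: mult.commute)
        finally show "(\<integral>\<^sup>+t. ennreal (indicator {a..b} t * (1 / (pi * s))) \<partial>lborel) = ennreal ((b - a) * (1 / (pi * s)))" .
      qed
      also have "\<dots> = ennreal ((b - a) * (1 / (pi * s))) * emeasure M (space M)" by simp
      also have "\<dots> < \<infinity>" using prob by (simp add: prob_space.emeasure_space_1 ennreal_mult_less_top)
      finally show "(\<integral>\<^sup>+p. ennreal (norm (F (fst p) (snd p))) \<partial>(M \<Otimes>\<^sub>M lborel)) < \<infinity>" .
    qed
    then show ?thesis by (simp add: split_beta')
  qed
  have "integral\<^sup>L M (Phi a b s) = (\<integral>x. (\<integral>t. F x t \<partial>lborel) \<partial>M)"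
    unfolding F_def using poisson_int(2)[OF s ab] by simp
  also have "\<dots> = integral\<^sup>L (M \<Otimes>\<^sub>M lborel) (\<lambda>(x, t). F x t)" by (rule PS.integral_fst[OF Fint])
  also have "\<dots> = (\<integral>t. (\<integral>x. F x t \<partial>M) \<partial>lborel)" by (rule PS.integral_snd[OF Fint, symmetric])
  also have "\<dots> = integral\<^sup>L lborel (\<lambda>t. indicator {a..b} t * (- Im (cauchy_transform M (Complex t s)) / pi))"
  proof (rule Bochner_Integration.integral_cong[OF refl])
    fix t
    have e: "(\<lambda>x. F x t) = (\<lambda>x. (indicator {a..b} t / pi) * (s / ((t - x)^2 + s^2)))"
    proof
      fix x
      have "0 < (t - x)^2 + s^2" using s by (simp add: add_nonneg_pos)
      then show "F x t = (indicator {a..b} t / pi) * (s / ((t - x)^2 + s^2))"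
        unfolding F_def by (simp add: field_simps)
    qed
    have "(\<integral>x. F x t \<partial>M) = (indicator {a..b} t / pi) * integral\<^sup>L M (\<lambda>x. s / ((t - x)^2 + s^2))"
      unfolding e by (rule integral_mult_right_zero)
    also have "\<dots> = indicator {a..b} t * (integral\<^sup>L M (\<lambda>x. s / ((t - x)^2 + s^2)) / pi)" by simp
    also have "\<dots> = indicator {a..b} t * (- Im (cauchy_transform M (Complex t s)) / pi)"
      using im_ct[OF s, of t] by simp
    finally show "(\<integral>x. F x t \<partial>M) = indicator {a..b} t * (- Im (cauchy_transform M (Complex t s)) / pi)" .
  qed
  finally show ?thesis .
qed

lemma psi_lim_int: "(\<lambda>n::nat. integral\<^sup>L M (Phi a b (1 / real (Suc n)))) \<longlonglongrightarrow> integral\<^sup>L M (psi a b)"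
proof (rule integral_dominated_convergence[where w = "\<lambda>_. 1"])
  show "integrable M (\<lambda>_. 1::real)" by simp
  show "AE x in M. (\<lambda>n. Phi a b (1 / real (Suc n)) x) \<longlonglongrightarrow> psi a b x" by (intro AE_I2 Phi_lim)
  show "\<And>n. AE x in M. norm (Phi a b (1 / real (Suc n)) x) \<le> 1" using Phi_bound by auto
qed auto

end

lemma sgn_lim: "(\<lambda>n::nat. sgn (c + 1 / real (Suc n))) \<longlonglongrightarrow> (if 0 \<le> c then 1 else -1 :: real)"
proof (cases "0 \<le> c")
  case True
  have "sgn (c + 1 / real (Suc n)) = 1" for n
  proof -
    have "0 < 1 / real (Suc n)" by simp
    then have "0 < c + 1 / real (Suc n)" using True by linarith
    then show ?thesis by simp
  qed
  then show ?thesis using True by simp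
next
  case False
  have l: "(\<lambda>n::nat. 1 / real (Suc n)) \<longlonglongrightarrow> 0" using LIMSEQ_inverse_real_of_nat by (simp add: inverse_eq_divide)
  have "eventually (\<lambda>n. 1 / real (Suc n) < -c) sequentially"
    using order_tendstoD(2)[OF l] False by simp
  then have "eventually (\<lambda>n. sgn (c + 1 / real (Suc n)) = -1) sequentially"
    by (rule eventually_mono) (simp add: sgn_if)
  then have "(\<lambda>n::nat. sgn (c + 1 / real (Suc n))) \<longlonglongrightarrow> -1"
    by (rule tendsto_eventually)
  then show ?thesis using False by simp
qed

lemma psi_shift_lim:
  assumes ab: "a \<le> b"
  shows "(\<lambda>n::nat. psi (a + 1 / real (Suc n)) (b + 1 / real (Suc n)) x) \<longlonglongrightarrow> indicator {a<..b} x"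
proof -
  have e: "psi (a + 1 / real (Suc n)) (b + 1 / real (Suc n)) x
      = (sgn ((b - x) + 1 / real (Suc n)) - sgn ((a - x) + 1 / real (Suc n))) / 2" for n
    by (simp add: psi_def algebra_simps)
  have "(\<lambda>n::nat. (sgn ((b - x) + 1 / real (Suc n)) - sgn ((a - x) + 1 / real (Suc n))) / 2)
      \<longlonglongrightarrow> ((if 0 \<le> b - x then 1 else -1) - (if 0 \<le> a - x then 1 else -1)) / 2"
    by (intro tendsto_intros sgn_lim) auto
  moreover have "((if 0 \<le> b - x then 1 else -1) - (if 0 \<le> a - x then 1 else -1)) / 2 = (indicator {a<..b} x :: real)"
    using ab by (auto simp: indicator_def)
  ultimately show ?thesis unfolding e by simp
qed

lemma psi_bound: "\<bar>psi a b x\<bar> \<le> 1"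
  unfolding psi_def by (auto simp: sgn_if)

lemma psi_eq:
  assumes p1: "prob_space M1" and s1: "sets M1 = sets borel"
    and p2: "prob_space M2" and s2: "sets M2 = sets borel"
    and ct: "\<And>z. Im z > 0 \<Longrightarrow> cauchy_transform M1 z = cauchy_transform M2 z"
    and ab: "a \<le> b"
  shows "integral\<^sup>L M1 (psi a b) = integral\<^sup>L M2 (psi a b)"
proof -
  have "integral\<^sup>L M1 (Phi a b (1 / real (Suc n))) = integral\<^sup>L M2 (Phi a b (1 / real (Suc n)))" for n
  proof -
    have s: "(0::real) < 1 / real (Suc n)" by simp
    have "\<And>t. cauchy_transform M1 (Complex t (1 / real (Suc n))) = cauchy_transform M2 (Complex t (1 / real (Suc n)))"
      using ct s by simp
    then show ?thesis using I_eq[OF p1 s1 s ab] I_eq[OF p2 s2 s ab] by simp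
  qed
  then have "(\<lambda>n. integral\<^sup>L M1 (Phi a b (1 / real (Suc n)))) = (\<lambda>n. integral\<^sup>L M2 (Phi a b (1 / real (Suc n))))"
    by (rule ext)
  then show ?thesis using psi_lim_int[OF p1 s1, of a b] psi_lim_int[OF p2 s2, of a b] LIMSEQ_unique
    by metis
qed

lemma Ioc_lim:
  assumes p: "prob_space M" and s[measurable_cong]: "sets M = sets borel" and ab: "a \<le> b"
  shows "(\<lambda>n::nat. integral\<^sup>L M (psi (a + 1 / real (Suc n)) (b + 1 / real (Suc n)))) \<longlonglongrightarrow> measure M {a<..b}"
proof -
  interpret prob_space M by (rule p)
  have sp: "space M = UNIV" using sets_eq_imp_space_eq[OF s] by simp
  have "(\<lambda>n::nat. integral\<^sup>L M (psi (a + 1 / real (Suc n)) (b + 1 / real (Suc n)))) \<longlonglongrightarrow> integral\<^sup>L M (indicator {a<..b})"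
  proof (rule integral_dominated_convergence[where w = "\<lambda>_. 1"])
    show "integrable M (\<lambda>_. 1::real)" by simp
    show "AE x in M. (\<lambda>n. psi (a + 1 / real (Suc n)) (b + 1 / real (Suc n)) x) \<longlonglongrightarrow> indicator {a<..b} x"
      using psi_shift_lim[OF ab] by auto
    show "\<And>n. AE x in M. norm (psi (a + 1 / real (Suc n)) (b + 1 / real (Suc n)) x) \<le> 1"
      using psi_bound by auto
  qed auto
  also have "integral\<^sup>L M (indicator {a<..b}) = measure M {a<..b}" using sp by simp
  finally show ?thesis .
qed

theorem ct_unique:
  assumes p1: "prob_space M1" and s1: "sets M1 = sets borel"
    and p2: "prob_space M2" and s2: "sets M2 = sets borel"
    and ct: "\<And>z. Im z > 0 \<Longrightarrow> cauchy_transform M1 z = cauchy_transform M2 z"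
  shows "M1 = M2"
proof -
  interpret P1: prob_space M1 by (rule p1)
  interpret P2: prob_space M2 by (rule p2)
  have meq: "measure M1 {a<..b} = measure M2 {a<..b}" if ab: "a \<le> b" for a b
  proof -
    have "integral\<^sup>L M1 (psi (a + 1 / real (Suc n)) (b + 1 / real (Suc n))) = integral\<^sup>L M2 (psi (a + 1 / real (Suc n)) (b + 1 / real (Suc n)))" for n
      using psi_eq[OF p1 s1 p2 s2 ct] ab by simp
    then have "(\<lambda>n. integral\<^sup>L M1 (psi (a + 1 / real (Suc n)) (b + 1 / real (Suc n)))) = (\<lambda>n. integral\<^sup>L M2 (psi (a + 1 / real (Suc n)) (b + 1 / real (Suc n))))"
      by (rule ext)
    then show ?thesis using Ioc_lim[OF p1 s1 ab] Ioc_lim[OF p2 s2 ab] LIMSEQ_unique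
      by metis
  qed
  have eeq: "emeasure M1 {a<..b} = emeasure M2 {a<..b}" for a b :: real
  proof (cases "a \<le> b")
    case True
    then show ?thesis using meq[OF True] by (simp add: P1.emeasure_eq_measure P2.emeasure_eq_measure)
  next
    case False
    then show ?thesis by simp
  qed
  show ?thesis
  proof (rule measure_eqI_generator_eq[where \<Omega> = UNIV and E = "range (\<lambda>(a, b). {a<..b::real})" and A = "\<lambda>i. {- real i<..real i}"])
    show "Int_stable (range (\<lambda>(a, b). {a<..b::real}))" by (auto simp: Int_stable_def)
    show "range (\<lambda>(a, b). {a<..b::real}) \<subseteq> Pow UNIV" by auto
    show "\<And>X. X \<in> range (\<lambda>(a, b). {a<..b::real}) \<Longrightarrow> emeasure M1 X = emeasure M2 X" using eeq by auto
    show "sets M1 = sigma_sets UNIV (range (\<lambda>(a, b). {a<..b::real}))"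
      using s1 by (simp add: borel_sigma_sets_Ioc)
    show "sets M2 = sigma_sets UNIV (range (\<lambda>(a, b). {a<..b::real}))"
      using s2 by (simp add: borel_sigma_sets_Ioc)
    show "range (\<lambda>i. {- real i<..real i}) \<subseteq> range (\<lambda>(a, b). {a<..b::real})" by auto
    show "(\<Union>i. {- real (i::nat)<..real i}) = UNIV" by (rule UN_Ioc_eq_UNIV)
    show "\<And>i. emeasure M1 {- real i<..real i} \<noteq> \<infinity>" by (simp add: P1.emeasure_eq_measure)
  qed
qed

lemma recip_inj: "1 / (a::complex) = 1 / b \<Longrightarrow> a = b"
  by (metis inverse_inverse_eq inverse_eq_divide)

lemma mconv_eq:
  assumes p: "prob_space \<mu>" and s: "sets \<mu> = sets borel"
  shows "monotone_conv \<mu> semicircle = Cm \<mu>"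
  unfolding monotone_conv_def
proof (rule the_equality)
  have rc: "recip_cauchy (Cm \<mu>) z = recip_cauchy \<mu> (recip_cauchy semicircle z)" if z: "Im z > 0" for z
    unfolding G0_props(4)[OF z] unfolding recip_cauchy_def using Cm_ct[OF p s z] by simp
  show "prob_space (Cm \<mu>) \<and> sets (Cm \<mu>) = sets borel \<and>
      (\<forall>z. 0 < Im z \<longrightarrow> recip_cauchy (Cm \<mu>) z = recip_cauchy \<mu> (recip_cauchy semicircle z))"
    using prob_Cm[OF p s] sets_Cm[OF p s] rc by auto
next
  fix \<rho> assume r: "prob_space \<rho> \<and> sets \<rho> = sets borel \<and>
      (\<forall>z. 0 < Im z \<longrightarrow> recip_cauchy \<rho> z = recip_cauchy \<mu> (recip_cauchy semicircle z))"
  have rc: "recip_cauchy (Cm \<mu>) z = recip_cauchy \<mu> (recip_cauchy semicircle z)" if z: "Im z > 0" for z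
    unfolding G0_props(4)[OF z] unfolding recip_cauchy_def using Cm_ct[OF p s z] by simp
  show "\<rho> = Cm \<mu>"
  proof (rule ct_unique)
    show "prob_space \<rho>" "sets \<rho> = sets borel" using r by auto
    show "prob_space (Cm \<mu>)" "sets (Cm \<mu>) = sets borel" using prob_Cm[OF p s] sets_Cm[OF p s] by auto
    fix z :: complex assume z: "Im z > 0"
    then have "recip_cauchy \<rho> z = recip_cauchy (Cm \<mu>) z" using r rc[OF z] by auto
    then show "cauchy_transform \<rho> z = cauchy_transform (Cm \<mu>) z"
      unfolding recip_cauchy_def by (rule recip_inj)
  qed
qed

lemma mp_prob: "prob_space (monotone_power semicircle m) \<and> sets (monotone_power semicircle m) = sets borel"
proof (induction m)
  case 0
  then show ?case by (simp add: prob_space_return)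
next
  case (Suc m)
  then have "monotone_power semicircle (Suc m) = Cm (monotone_power semicircle m)"
    using mconv_eq by simp
  then show ?case using prob_Cm sets_Cm Suc by simp
qed

lemma mp_Suc: "monotone_power semicircle (Suc m) = Cm (monotone_power semicircle m)"
  using mconv_eq mp_prob by simp

lemma phi_neg: "phi (-x) = - phi x"
  by (simp add: phi_def)

lemma phi_diff: "u \<noteq> 0 \<Longrightarrow> v \<noteq> 0 \<Longrightarrow> phi v - phi u = (v - u) * (1 - 1 / (u * v))"
  by (simp add: phi_def field_simps)

lemma phi_mono: "1 \<le> u \<Longrightarrow> u \<le> v \<Longrightarrow> phi u \<le> phi v"
proof -
  assume u: "1 \<le> u" and uv: "u \<le> v"
  have "1 * 1 \<le> u * v" using u uv by (intro mult_mono) auto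
  then have "1 \<le> u * v" by simp
  then have "0 \<le> 1 - 1 / (u * v)" by simp
  moreover have "0 \<le> v - u" using uv by simp
  ultimately have "0 \<le> phi v - phi u" using phi_diff[of u v] u uv by simp
  then show ?thesis by simp
qed

lemma phi_strict: "1 \<le> u \<Longrightarrow> u < v \<Longrightarrow> phi u < phi v"
proof -
  assume u: "1 \<le> u" and uv: "u < v"
  have "u * 1 < u * v" using u uv by (intro mult_strict_left_mono) auto
  then have "1 < u * v" using u by linarith
  then have "0 < 1 - 1 / (u * v)" by simp
  moreover have "0 < v - u" using uv by simp
  ultimately have "0 < phi v - phi u" using phi_diff[of u v] u uv by simp
  then show ?thesis by simp
qed

lemma phi_ge2: "1 \<le> a \<Longrightarrow> 2 \<le> phi a"
  using phi_mono[of 1 a] by (simp add: phi_def)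

lemma phi_bound: "1 \<le> \<bar>x\<bar> \<Longrightarrow> \<bar>x\<bar> \<le> a \<Longrightarrow> \<bar>phi x\<bar> \<le> phi a"
proof -
  assume x: "1 \<le> \<bar>x\<bar>" and xa: "\<bar>x\<bar> \<le> a"
  have "phi \<bar>x\<bar> \<le> phi a" using phi_mono[OF x xa] .
  moreover have "0 \<le> phi \<bar>x\<bar>" using phi_ge2[OF x] by simp
  moreover have "\<bar>phi x\<bar> = phi \<bar>x\<bar>"
  proof (cases "x \<ge> 0")
    case True then show ?thesis using phi_ge2[OF x] by simp
  next
    case False
    then have "phi x = - phi \<bar>x\<bar>" using phi_neg[of "\<bar>x\<bar>"] by simp
    then show ?thesis using phi_ge2[OF x] by simp
  qed
  ultimately show ?thesis by simp
qed

lemma prob_meas_pos: "prob_space M \<Longrightarrow> (0 < measure M A \<longleftrightarrow> 0 < emeasure M A)"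
proof -
  assume "prob_space M"
  then interpret prob_space M .
  show ?thesis by (simp add: emeasure_eq_measure)
qed

lemma supp_upper:
  assumes p: "prob_space M" and s: "sets M = sets borel" and n: "emeasure M {y. b < \<bar>y\<bar>} = 0"
  shows "msupport M \<subseteq> {-b..b}"
proof
  fix y assume y: "y \<in> msupport M"
  show "y \<in> {-b..b}"
  proof (rule ccontr)
    assume "y \<notin> {-b..b}"
    then have yb: "b < \<bar>y\<bar>" by auto
    have sub: "ball y (\<bar>y\<bar> - b) \<subseteq> {y. b < \<bar>y\<bar>}"
    proof
      fix u assume "u \<in> ball y (\<bar>y\<bar> - b)"
      then have "\<bar>u - y\<bar> < \<bar>y\<bar> - b" by (simp add: dist_real_def abs_minus_commute)
      then show "u \<in> {y. b < \<bar>y\<bar>}" by auto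
    qed
    have "{y. b < \<bar>y\<bar>} \<in> sets M" using s by simp
    then have "emeasure M (ball y (\<bar>y\<bar> - b)) \<le> emeasure M {y. b < \<bar>y\<bar>}" by (rule emeasure_mono[OF sub])
    then have "emeasure M (ball y (\<bar>y\<bar> - b)) \<le> 0" using n by simp
    then have "\<not> 0 < emeasure M (ball y (\<bar>y\<bar> - b))" by simp
    moreover have "0 < measure M (ball y (\<bar>y\<bar> - b))" using y yb unfolding msupport_def by auto
    ultimately show False using prob_meas_pos[OF p] by blast
  qed
qed

context
  fixes \<mu> :: "real measure"
  assumes prob: "prob_space \<mu>" and sets_mu[measurable_cong]: "sets \<mu> = sets borel"
begin

lemma Cm_emeasure:
  assumes A[measurable]: "A \<in> sets borel"
  shows "emeasure (Cm \<mu>) A = (\<integral>\<^sup>+x. (\<integral>\<^sup>+u. ennreal (K x u) * indicator A u \<partial>lborel) + ennreal (q x) * indicator A (phi x) \<partial>\<mu>)"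
proof -
  have "emeasure (Cm \<mu>) A = (\<integral>\<^sup>+y. indicator A y \<partial>Cm \<mu>)"
    using A sets_Cm[OF prob sets_mu] by (simp add: nn_integral_indicator)
  also have "\<dots> = (\<integral>\<^sup>+x. (\<integral>\<^sup>+u. ennreal (K x u) * indicator A u \<partial>lborel) + ennreal (q x) * indicator A (phi x) \<partial>\<mu>)"
    by (rule Cm_nn[OF prob sets_mu]) simp
  finally show ?thesis .
qed

lemma Cm_upper:
  assumes a: "1 \<le> a" and ae: "AE x in \<mu>. \<bar>x\<bar> \<le> a"
  shows "emeasure (Cm \<mu>) {y. phi a < \<bar>y\<bar>} = 0"
proof -
  define B where "B = {y::real. phi a < \<bar>y\<bar>}"
  have Bm[measurable]: "B \<in> sets borel" unfolding B_def by measurable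
  have k0: "(\<integral>\<^sup>+u. ennreal (K x u) * indicator B u \<partial>lborel) = 0" for x
  proof -
    have pz: "ennreal (K x u) * indicator B u = 0" for u
    proof (cases "K x u = 0")
      case False
      then have "sd u \<noteq> 0" by (auto simp: K_def)
      then have "\<bar>u\<bar> < 2" by (rule sd_ne0)
      then have "u \<notin> B" using phi_ge2[OF a] by (auto simp: B_def)
      then show ?thesis by simp
    qed simp
    have "(\<integral>\<^sup>+u. ennreal (K x u) * indicator B u \<partial>lborel) = (\<integral>\<^sup>+u. 0 \<partial>(lborel::real measure))"
      by (simp only: pz)
    then show ?thesis by simp
  qed
  have "emeasure (Cm \<mu>) B = (\<integral>\<^sup>+x. (\<integral>\<^sup>+u. ennreal (K x u) * indicator B u \<partial>lborel) + ennreal (q x) * indicator B (phi x) \<partial>\<mu>)"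
    by (rule Cm_emeasure[OF Bm])
  also have "\<dots> = (\<integral>\<^sup>+x. 0 \<partial>\<mu>)"
  proof (rule nn_integral_cong_AE)
    show "AE x in \<mu>. (\<integral>\<^sup>+u. ennreal (K x u) * indicator B u \<partial>lborel) + ennreal (q x) * indicator B (phi x) = 0"
      using ae
    proof (rule AE_mp, intro AE_I2 impI)
      fix x :: real assume xa: "\<bar>x\<bar> \<le> a"
      have "ennreal (q x) * indicator B (phi x) = 0"
      proof (cases "\<bar>x\<bar> > 1")
        case True
        then have "\<bar>phi x\<bar> \<le> phi a" using phi_bound[of x a] xa by simp
        then have "phi x \<notin> B" by (auto simp: B_def)
        then show ?thesis by simp
      next
        case False
        then show ?thesis by (simp add: q_def)
      qed
      then show "(\<integral>\<^sup>+u. ennreal (K x u) * indicator B u \<partial>lborel) + ennreal (q x) * indicator B (phi x) = 0"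
        using k0 by simp
    qed
  qed
  also have "\<dots> = 0" by simp
  finally show ?thesis unfolding B_def .
qed

lemma Cm_lower_small:
  assumes y: "\<bar>y\<bar> \<le> 2" and e: "e > 0"
  shows "0 < emeasure (Cm \<mu>) (ball y e)"
proof -
  have [measurable]: "ball y e \<in> sets borel" by simp
  interpret prob_space \<mu> by (rule prob)
  define c where "c = max (y - e) (-2)"
  define d where "d = min (y + e) 2"
  have cd: "c < d" using y e by (auto simp: c_def d_def abs_le_iff)
  have sub: "{c<..<d} \<subseteq> ball y e \<inter> {u. \<bar>u\<bar> < 2}"
    by (auto simp: c_def d_def dist_real_def abs_less_iff)
  have inner: "0 < (\<integral>\<^sup>+u. ennreal (K x u) * indicator (ball y e) u \<partial>lborel)" for x
  proof (rule ccontr)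
    assume "\<not> 0 < (\<integral>\<^sup>+u. ennreal (K x u) * indicator (ball y e) u \<partial>lborel)"
    then have z: "(\<integral>\<^sup>+u. ennreal (K x u) * indicator (ball y e) u \<partial>lborel) = 0" by (simp add: zero_less_iff_neq_zero)
    have "emeasure lborel {u \<in> space lborel. ennreal (K x u) * indicator (ball y e) u \<noteq> 0} = 0"
      using z by (subst (asm) nn_integral_0_iff) auto
    moreover have "{c<..<d} \<subseteq> {u \<in> space lborel. ennreal (K x u) * indicator (ball y e) u \<noteq> 0}"
    proof
      fix u assume "u \<in> {c<..<d}"
      then have "u \<in> ball y e" "\<bar>u\<bar> < 2" using sub by auto
      then show "u \<in> {u \<in> space lborel. ennreal (K x u) * indicator (ball y e) u \<noteq> 0}"
        using K_pos[of u x] by auto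
    qed
    moreover have "{u \<in> space lborel. ennreal (K x u) * indicator (ball y e) u \<noteq> 0} \<in> sets lborel" by measurable
    ultimately have "emeasure lborel {c<..<d} \<le> 0"
      using emeasure_mono by metis
    then show False using cd by simp
  qed
  have "0 < (\<integral>\<^sup>+x. (\<integral>\<^sup>+u. ennreal (K x u) * indicator (ball y e) u \<partial>lborel) \<partial>\<mu>)"
  proof (rule ccontr)
    assume "\<not> ?thesis"
    then have "(\<integral>\<^sup>+x. (\<integral>\<^sup>+u. ennreal (K x u) * indicator (ball y e) u \<partial>lborel) \<partial>\<mu>) = 0"
      by (simp add: zero_less_iff_neq_zero)
    then have "AE x in \<mu>. (\<integral>\<^sup>+u. ennreal (K x u) * indicator (ball y e) u \<partial>lborel) = 0"
      by (subst (asm) nn_integral_0_iff_AE) auto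
    then have "AE x in \<mu>. False" using inner by (auto elim!: AE_mp simp: zero_less_iff_neq_zero)
    then show False by simp
  qed
  also have "\<dots> \<le> (\<integral>\<^sup>+x. (\<integral>\<^sup>+u. ennreal (K x u) * indicator (ball y e) u \<partial>lborel) + ennreal (q x) * indicator (ball y e) (phi x) \<partial>\<mu>)"
    by (intro nn_integral_mono) simp
  also have "\<dots> = emeasure (Cm \<mu>) (ball y e)" by (rule Cm_emeasure[symmetric]) simp
  finally show ?thesis .
qed

lemma Cm_lower_atom:
  assumes x0: "x0 \<in> msupport \<mu>" and x1: "1 < \<bar>x0\<bar>"
  shows "phi x0 \<in> msupport (Cm \<mu>)"
  unfolding msupport_def
proof (intro CollectI allI impI)
  interpret prob_space \<mu> by (rule prob)
  fix e :: real assume e: "e > 0"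
  have "isCont phi x0" unfolding phi_def using x1 by (intro continuous_intros) auto
  then obtain d0 where d0: "d0 > 0" "\<And>x. dist x x0 < d0 \<Longrightarrow> dist (phi x) (phi x0) < e"
    unfolding continuous_at_eps_delta using e by blast
  define d where "d = min d0 (\<bar>x0\<bar> - 1)"
  have [measurable]: "ball x0 d \<in> sets borel" by simp
  have d: "d > 0" "d \<le> d0" "d \<le> \<bar>x0\<bar> - 1" using d0 x1 by (auto simp: d_def)
  have inb: "x \<in> ball x0 d \<Longrightarrow> 1 < \<bar>x\<bar> \<and> phi x \<in> ball (phi x0) e" for x
  proof -
    assume "x \<in> ball x0 d"
    then have dx: "dist x x0 < d" by (simp add: dist_commute)
    then have "\<bar>x - x0\<bar> < \<bar>x0\<bar> - 1" using d by (simp add: dist_real_def)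
    then have "1 < \<bar>x\<bar>" by linarith
    moreover have "dist (phi x) (phi x0) < e" using d0(2)[of x] dx d by simp
    ultimately show ?thesis by (simp add: dist_commute)
  qed
  have mpos: "0 < emeasure \<mu> (ball x0 d)" using x0 d(1) prob_meas_pos[OF prob] unfolding msupport_def by blast
  have "0 < (\<integral>\<^sup>+x. ennreal (q x) * indicator (ball x0 d) x \<partial>\<mu>)"
  proof (rule ccontr)
    assume "\<not> ?thesis"
    then have "(\<integral>\<^sup>+x. ennreal (q x) * indicator (ball x0 d) x \<partial>\<mu>) = 0" by (simp add: zero_less_iff_neq_zero)
    then have "emeasure \<mu> {x \<in> space \<mu>. ennreal (q x) * indicator (ball x0 d) x \<noteq> 0} = 0"
      by (subst (asm) nn_integral_0_iff) auto
    moreover have "ball x0 d \<subseteq> {x \<in> space \<mu>. ennreal (q x) * indicator (ball x0 d) x \<noteq> 0}"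
    proof
      fix x assume xb: "x \<in> ball x0 d"
      then have "1 < \<bar>x\<bar>" using inb by blast
      then have "1 < x^2" using power_strict_mono[of 1 "\<bar>x\<bar>" 2] by simp
      then have "0 < q x" using \<open>1 < \<bar>x\<bar>\<close> by (simp add: q_def)
      moreover have "space \<mu> = UNIV" using sets_eq_imp_space_eq[OF sets_mu] by simp
      ultimately show "x \<in> {x \<in> space \<mu>. ennreal (q x) * indicator (ball x0 d) x \<noteq> 0}" using xb by simp
    qed
    moreover have "{x \<in> space \<mu>. ennreal (q x) * indicator (ball x0 d) x \<noteq> 0} \<in> sets \<mu>" by measurable
    ultimately have "emeasure \<mu> (ball x0 d) \<le> 0"
      using emeasure_mono by metis
    then show False using mpos by simp
  qed
  also have "\<dots> \<le> (\<integral>\<^sup>+x. (\<integral>\<^sup>+u. ennreal (K x u) * indicator (ball (phi x0) e) u \<partial>lborel) + ennreal (q x) * indicator (ball (phi x0) e) (phi x) \<partial>\<mu>)"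
  proof (intro nn_integral_mono)
    fix x
    have "ennreal (q x) * indicator (ball x0 d) x \<le> ennreal (q x) * indicator (ball (phi x0) e) (phi x)"
      using inb[of x] by (cases "x \<in> ball x0 d") auto
    then show "ennreal (q x) * indicator (ball x0 d) x \<le> (\<integral>\<^sup>+u. ennreal (K x u) * indicator (ball (phi x0) e) u \<partial>lborel) + ennreal (q x) * indicator (ball (phi x0) e) (phi x)"
      by (simp add: add_increasing)
  qed
  also have "\<dots> = emeasure (Cm \<mu>) (ball (phi x0) e)" by (rule Cm_emeasure[symmetric]) simp
  finally show "0 < measure (Cm \<mu>) (ball (phi x0) e)" using prob_meas_pos[OF prob_Cm[OF prob sets_mu]] by blast
qed

end

lemma inv_phi:
  assumes y: "y > 2"
  shows "\<exists>x0. 1 < x0 \<and> phi x0 = y"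
proof -
  define s where "s = sqrt (y^2 - 4)"
  have y4: "y^2 - 4 > 0" using y power_strict_mono[of 2 y 2] by simp
  have s0: "s \<ge> 0" and s2: "s^2 = y^2 - 4" using y4 by (auto simp: s_def)
  define x0 where "x0 = (y + s) / 2"
  have x0: "1 < x0" using y s0 by (simp add: x0_def)
  have "x0 * ((y - s) / 2) = 1" unfolding x0_def using s2 by (simp add: field_simps power2_eq_square)
  then have "1 / x0 = (y - s) / 2" using x0 by (simp add: field_simps)
  then have "phi x0 = y" by (simp add: phi_def x0_def field_simps)
  then show ?thesis using x0 by blast
qed

lemma AE_from_null:
  assumes "emeasure M {y. b < \<bar>y\<bar>} = 0" "sets M = sets borel"
  shows "AE y in M. \<bar>y::real\<bar> \<le> b"
proof (rule AE_I'[of "{y. b < \<bar>y\<bar>}"])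
  show "{y. b < \<bar>y\<bar>} \<in> null_sets M" using assms by (simp add: null_sets_def)
  show "{x \<in> space M. \<not> \<bar>x\<bar> \<le> b} \<subseteq> {y. b < \<bar>y\<bar>}" by auto
qed

lemma small_in_supp:
  assumes p: "prob_space \<mu>" and s: "sets \<mu> = sets borel" and y: "\<bar>y\<bar> \<le> 2"
  shows "y \<in> msupport (Cm \<mu>)"
  unfolding msupport_def using Cm_lower_small[OF p s y] prob_meas_pos[OF prob_Cm[OF p s]] by blast

lemma supp_step:
  assumes p: "prob_space \<mu>" and s: "sets \<mu> = sets borel" and a: "2 \<le> a"
    and sup: "msupport \<mu> = {-a..a}" and ae: "AE x in \<mu>. \<bar>x\<bar> \<le> a"
  shows "msupport (Cm \<mu>) = {-phi a..phi a} \<and> (AE y in Cm \<mu>. \<bar>y\<bar> \<le> phi a)"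
proof -
  have a1: "1 \<le> a" using a by simp
  have null: "emeasure (Cm \<mu>) {y. phi a < \<bar>y\<bar>} = 0" by (rule Cm_upper[OF p s a1 ae])
  have "msupport (Cm \<mu>) \<subseteq> {-phi a..phi a}"
    by (rule supp_upper[OF prob_Cm[OF p s] sets_Cm[OF p s] null])
  moreover have "{-phi a..phi a} \<subseteq> msupport (Cm \<mu>)"
  proof
    fix y assume y: "y \<in> {-phi a..phi a}"
    show "y \<in> msupport (Cm \<mu>)"
    proof (cases "\<bar>y\<bar> \<le> 2")
      case True
      then show ?thesis by (rule small_in_supp[OF p s])
    next
      case False
      then have y2: "2 < \<bar>y\<bar>" by simp
      obtain x0 where x0: "1 < x0" "phi x0 = \<bar>y\<bar>" using inv_phi[OF y2] by blast
      have x0a: "x0 \<le> a"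
      proof (rule ccontr)
        assume "\<not> x0 \<le> a"
        then have "phi a < phi x0" using phi_strict[OF a1] by simp
        then show False using x0 y by auto
      qed
      show ?thesis
      proof (cases "y \<ge> 0")
        case True
        have "x0 \<in> msupport \<mu>" using sup x0 x0a by auto
        then have "phi x0 \<in> msupport (Cm \<mu>)" using Cm_lower_atom[OF p s] x0(1) by simp
        then show ?thesis using x0 True by simp
      next
        case False
        have "-x0 \<in> msupport \<mu>" using sup x0 x0a by auto
        then have "phi (-x0) \<in> msupport (Cm \<mu>)" using Cm_lower_atom[OF p s] x0(1) by simp
        then show ?thesis using x0 False phi_neg[of x0] by simp
      qed
    qed
  qed
  ultimately show ?thesis using AE_from_null[OF null sets_Cm[OF p s]] by blast
qed

lemma supp_base:
  "msupport (monotone_power semicircle 1) = {-2..2} \<and> (AE y in monotone_power semicircle 1. \<bar>y\<bar> \<le> 2)"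
proof -
  let ?d = "return borel (0::real)"
  have p: "prob_space ?d" and s: "sets ?d = sets borel" by (auto simp: prob_space_return)
  have ae: "AE x in ?d. \<bar>x\<bar> \<le> 1" by (subst AE_return) auto
  have e1: "monotone_power semicircle 1 = Cm ?d" using mp_Suc[of 0] by simp
  have ph: "phi 1 = 2" by (simp add: phi_def)
  have null: "emeasure (Cm ?d) {y. 2 < \<bar>y\<bar>} = 0" using Cm_upper[OF p s _ ae] ph by simp
  have "msupport (Cm ?d) \<subseteq> {-2..2}"
    by (rule supp_upper[OF prob_Cm[OF p s] sets_Cm[OF p s] null])
  moreover have "{-2..2} \<subseteq> msupport (Cm ?d)"
    using small_in_supp[OF p s] by auto
  ultimately show ?thesis unfolding e1 using AE_from_null[OF null sets_Cm[OF p s]] by blast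
qed

theorem theorem3p9:
  fixes a :: "nat \<Rightarrow> real"
  assumes "a 1 = 2"
    and "\<And>m. m \<ge> 1 \<Longrightarrow> a (Suc m) = a m + 1 / a m"
  shows "(\<forall>m\<ge>1. msupport (monotone_power semicircle m) = {- a m .. a m}) \<and>
         (\<forall>m\<ge>2. msupport (monotone_power semicircle (m - 1))
                    \<subseteq> msupport (monotone_power semicircle m))"
proof -
  have main: "msupport (monotone_power semicircle m) = {- a m .. a m} \<and>
      (AE y in monotone_power semicircle m. \<bar>y\<bar> \<le> a m) \<and> 2 \<le> a m" if m: "m \<ge> 1" for m
    using m
  proof (induction m rule: nat_induct_at_least)
    case base
    then show ?case using supp_base assms(1) by simp
  next
    case (Suc n)
    have an: "a (Suc n) = phi (a n)" using assms(2)[OF Suc(1)] by (simp add: phi_def)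
    have pn: "prob_space (monotone_power semicircle n)" "sets (monotone_power semicircle n) = sets borel"
      using mp_prob by auto
    have st: "msupport (Cm (monotone_power semicircle n)) = {-phi (a n)..phi (a n)} \<and>
        (AE y in Cm (monotone_power semicircle n). \<bar>y\<bar> \<le> phi (a n))"
      using supp_step[OF pn] Suc(2) by blast
    have "2 \<le> phi (a n)" using phi_ge2[of "a n"] Suc(2) by simp
    then show ?case using st unfolding mp_Suc an by simp
  qed
  show ?thesis
  proof (intro conjI allI impI)
    fix m :: nat assume "1 \<le> m"
    then show "msupport (monotone_power semicircle m) = {- a m .. a m}" using main by blast
  next
    fix m :: nat assume m: "2 \<le> m"
    define k where "k = m - 1"
    have k: "1 \<le> k" "m = Suc k" using m by (auto simp: k_def)
    have mk: "2 \<le> a k" using main[OF k(1)] by blast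
    have "a m = a k + 1 / a k" using assms(2)[OF k(1)] k(2) by simp
    moreover have "0 < 1 / a k" using mk by simp
    ultimately have "a k \<le> a m" by simp
    then have "{- a k .. a k} \<subseteq> {- a m .. a m}" by auto
    moreover have "msupport (monotone_power semicircle k) = {- a k .. a k}" using main[OF k(1)] by blast
    moreover have "msupport (monotone_power semicircle m) = {- a m .. a m}" using main[of m] m by simp
    moreover have "m - 1 = k" by (simp add: k_def)
    ultimately show "msupport (monotone_power semicircle (m - 1)) \<subseteq> msupport (monotone_power semicircle m)"
      by simp
  qed
qed

end
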